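(* Let $\theta^n(x^1,x^2)$, $n=1,\dots,m$, be dependent variables and $u^\alpha=u^\alpha([\theta],x^3)\in\mathfrak g$, $\alpha=1,2$, such that the equation $\Delta\equiv D_2u^1-D_1u^2+[u^1,u^2]=0$ is equivalent to an integrable system of PDEs in $\theta$ independent of the spectral parameter $x^3$, and is the compatibility condition of the LSP $D_\alpha\Phi=u^\alpha\Phi$, $\alpha=1,2$, for a $G$-valued matrix function $\Phi=\Phi([\theta],x^3)$ (which solves this LSP). Suppose the generalized vector field $\vec w_{\mathcal Q}=\sum_n\mathcal Q_n[\theta]\,\partial/\partial\theta^n$ is a generalized symmetry of $\Delta=0$. Then the following are equivalent: (1) $\vec w_{\mathcal Q}$ is a symmetry of the LSP in the sense that $\mathrm{pr}\,\vec w_{\mathcal Q}(D_\alpha\Phi-u^\alpha\Phi)=0$ whenever $D_\alpha\Phi-u^\alpha\Phi=0$, $\alpha=1,2$; (2) the $\mathfrak g$-valued immersion function $\widetilde F(x^i)=F([\theta],x^3)=\Phi^{-1}\,\mathrm{pr}\,\vec w_{\mathcal Q}\Phi$ has tangent vectors $D_\alpha F=\Phi^{-1}(\mathrm{pr}\,\vec w_{\mathcal Q}u^\alpha)\Phi$, $\alpha=1,2$; (3) the infinitesimal deformation $(u^1,u^2,\Phi)\mapsto(u^1,u^2,\Phi)+\epsilon(\mathrm{pr}\,\vec w_{\mathcal Q}u^1,\mathrm{pr}\,\vec w_{\mathcal Q}u^2,\mathrm{pr}\,\vec w_{\mathcal Q}\Phi)$ is a generalized infinitesimal symmetry of the system $\Delta=0$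 together with its LSP.
   Context: $G$ is a matrix Lie group with Lie algebra $\mathfrak g$. The independent variables are $x^1,x^2$; $x^3$ is the spectral parameter. For multi-indices $J$ with entries in $\{1,2\}$, $\theta^n_J$ are jet coordinates; $f([\theta],x^3)$ denotes a function of $x^1,x^2,x^3$ and finitely many $\theta^n_J$. Total derivatives: $D_\alpha=\partial/\partial x^\alpha+\theta^n_{J,\alpha}\partial/\partial\theta^n_J$. Prolongation: $\mathrm{pr}\,\vec w_{\mathcal Q}=\sum_J D_J\mathcal Q_n\,\partial/\partial\theta^n_J$, acting entrywise on matrix-valued differential functions such as $u^\alpha$ and $\Phi$. $\vec w_{\mathcal Q}$ is a generalized symmetry of $\Delta=0$ iff $\mathrm{pr}\,\vec w_{\mathcal Q}(\Delta)=0$ whenever $\Delta=0$. The deformation $(u^1,u^2,\Phi)\mapsto(u^1,u^2,\Phi)+\epsilon(A_1,A_2,\Psi)$ is called a generalized infinitesimal symmetry of the system together with its LSP if $D_2A_1-D_1A_2+[A_1,u^2]+[u^1,A_2]=0$ on solutions, $\Phi^{-1}\Psi\in\mathfrak g$, and $D_\alpha\Psi=u^\alpha\Psi+A_\alpha\Phi$, $\alpha=1,2$. *)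

theory Defs
  imports "HOL-Analysis.Analysis"
begin

text \<open>Jet coordinates: the independent variables x1, x2, the spectral parameter x3,
  and the derivative coordinates Th n a b standing for theta^n_J where the (unordered)
  multi-index J contains the index 1 exactly a times and the index 2 exactly b times.\<close>

datatype jc = X1 | X2 | X3 | Th nat nat nat

type_synonym jet = "jc \<Rightarrow> real"

fun relevant :: "nat \<Rightarrow> nat \<Rightarrow> jc \<Rightarrow> bool" where
  "relevant m N (Th n a b) = (1 \<le> n \<and> n \<le> m \<and> a + b \<le> N)"
| "relevant m N _ = True"

definition depends_only :: "nat \<Rightarrow> nat \<Rightarrow> (jet \<Rightarrow> 'v) \<Rightarrow> bool" where
  "depends_only m N f \<longleftrightarrow> (\<forall>p q. (\<forall>c. relevant m N c \<longrightarrow> p c = q c) \<longrightarrow> f p = f q)"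

definition indep_x3 :: "(jet \<Rightarrow> 'v) \<Rightarrow> bool" where
  "indep_x3 f \<longleftrightarrow> (\<forall>p t. f (p(X3 := t)) = f p)"

definition pd :: "jc \<Rightarrow> (jet \<Rightarrow> 'v::real_normed_vector) \<Rightarrow> jet \<Rightarrow> 'v" where
  "pd c f p = vector_derivative (\<lambda>t. f (p(c := t))) (at (p c))"

fun ipd :: "jc list \<Rightarrow> (jet \<Rightarrow> 'v::real_normed_vector) \<Rightarrow> jet \<Rightarrow> 'v" where
  "ipd [] f = f"
| "ipd (c # cs) f = pd c (ipd cs f)"

text \<open>For functions depending on finitely many
  coordinates this is exactly C-infinity smoothness in those coordinates.\<close>
definition smooth_jet :: "(jet \<Rightarrow> 'v::real_normed_vector) \<Rightarrow> bool" where
  "smooth_jet f \<longleftrightarrow>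
     (\<forall>cs. continuous_on UNIV (ipd cs f)) \<and>
     (\<forall>cs c p. (\<lambda>t. ipd cs f (p(c := t))) differentiable (at (p c)))"

definition diff_fun :: "nat \<Rightarrow> (jet \<Rightarrow> 'v::real_normed_vector) \<Rightarrow> bool" where
  "diff_fun m f \<longleftrightarrow> smooth_jet f \<and> (\<exists>N. depends_only m N f)"

definition ord :: "nat \<Rightarrow> (jet \<Rightarrow> 'v) \<Rightarrow> nat" where
  "ord m f = (LEAST N. depends_only m N f)"

definition thcoords :: "nat \<Rightarrow> nat \<Rightarrow> (nat \<times> nat \<times> nat) set" where
  "thcoords m N = {(n, a, b). 1 \<le> n \<and> n \<le> m \<and> a + b \<le> N}"

fun xc :: "nat \<Rightarrow> jc" where
  "xc (Suc 0) = X1"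
| "xc _ = X2"

fun shift :: "nat \<Rightarrow> nat \<times> nat \<times> nat \<Rightarrow> jc" where
  "shift (Suc 0) (n, a, b) = Th n (Suc a) b"
| "shift _ (n, a, b) = Th n a (Suc b)"

definition TD :: "nat \<Rightarrow> nat \<Rightarrow> (jet \<Rightarrow> 'v::real_normed_vector) \<Rightarrow> jet \<Rightarrow> 'v" where
  "TD m \<alpha> f p = pd (xc \<alpha>) f p +
     (\<Sum>(n, a, b) \<in> thcoords m (ord m f). p (shift \<alpha> (n, a, b)) *\<^sub>R pd (Th n a b) f p)"

definition TDJ :: "nat \<Rightarrow> nat \<Rightarrow> nat \<Rightarrow> (jet \<Rightarrow> 'v::real_normed_vector) \<Rightarrow> jet \<Rightarrow> 'v" where
  "TDJ m a b f = (TD m 1 ^^ a) ((TD m 2 ^^ b) f)"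

definition prw :: "nat \<Rightarrow> (nat \<Rightarrow> jet \<Rightarrow> real) \<Rightarrow> (jet \<Rightarrow> 'v::real_normed_vector) \<Rightarrow> jet \<Rightarrow> 'v" where
  "prw m Q f p = (\<Sum>(n, a, b) \<in> thcoords m (ord m f). TDJ m a b (Q n) p *\<^sub>R pd (Th n a b) f p)"

definition zero_set :: "nat \<Rightarrow> (jet \<Rightarrow> 'v::real_normed_vector) set \<Rightarrow> jet set" where
  "zero_set m E = {p. \<forall>f\<in>E. \<forall>a b. TDJ m a b f p = 0}"

type_synonym 'k cmat = "complex^'k^'k"

definition brk :: "'k::finite cmat \<Rightarrow> 'k cmat \<Rightarrow> 'k cmat" where
  "brk A B = A ** B - B ** A"

fun matpow :: "'k::finite cmat \<Rightarrow> nat \<Rightarrow> 'k cmat" where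
  "matpow A 0 = mat 1"
| "matpow A (Suc n) = A ** matpow A n"

definition mexp :: "'k::finite cmat \<Rightarrow> 'k cmat" where
  "mexp A = (\<Sum>n. (1 / fact n) *\<^sub>R matpow A n)"

definition matrix_lie_group :: "'k::finite cmat set \<Rightarrow> bool" where
  "matrix_lie_group G \<longleftrightarrow>
     G \<subseteq> {A. invertible A} \<and> mat 1 \<in> G \<and>
     (\<forall>A\<in>G. \<forall>B\<in>G. A ** B \<in> G) \<and> (\<forall>A\<in>G. matrix_inv A \<in> G) \<and>
     closedin (top_of_set {A. invertible A}) G"

definition lie_alg :: "'k::finite cmat set \<Rightarrow> 'k cmat set" where
  "lie_alg G = {X. \<forall>t::real. mexp (t *\<^sub>R X) \<in> G}"

text \<open>S is the (prolonged) solution set of Delta = 0; u 1, u 2 are the potentials.\<close>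
definition gen_inf_sym ::
  "nat \<Rightarrow> 'k::finite cmat set \<Rightarrow> jet set \<Rightarrow> (nat \<Rightarrow> jet \<Rightarrow> 'k cmat) \<Rightarrow> (jet \<Rightarrow> 'k cmat)
    \<Rightarrow> (nat \<Rightarrow> jet \<Rightarrow> 'k cmat) \<Rightarrow> (jet \<Rightarrow> 'k cmat) \<Rightarrow> bool" where
  "gen_inf_sym m G S u \<Phi> A \<Psi> \<longleftrightarrow>
     (\<forall>p\<in>S. TD m 2 (A 1) p - TD m 1 (A 2) p + brk (A 1 p) (u 2 p) + brk (u 1 p) (A 2 p) = 0) \<and>
     (\<forall>p. matrix_inv (\<Phi> p) ** \<Psi> p \<in> lie_alg G) \<and>
     (\<forall>\<alpha>\<in>{1,2}. \<forall>p\<in>S. TD m \<alpha> \<Psi> p = u \<alpha> p ** \<Psi> p + A \<alpha> p ** \<Phi> p)"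

end

theory Submission
  imports Defs
begin


lemma mv_scaleR: "(A::complex^'n::finite^'m::finite) *v (c *\<^sub>R x) = c *\<^sub>R (A *v x)"
  by (simp add: vec_eq_iff matrix_vector_mult_def scaleR_sum_right)

lemma bl_mv: "bounded_linear (\<lambda>x::complex^'k::finite. A *v x)"
proof -
  have "linear (\<lambda>x::complex^'k::finite. A *v x)"
    by (rule linearI) (simp_all add: matrix_vector_right_distrib mv_scaleR)
  then show ?thesis using linear_conv_bounded_linear by blast
qed

definition Lm :: "'k::finite cmat \<Rightarrow> ((complex^'k) \<Rightarrow>\<^sub>L (complex^'k))" where
  "Lm A = Blinfun (\<lambda>x. A *v x)"

lemma Lm_apply[simp]: "blinfun_apply (Lm A) x = A *v x"
  unfolding Lm_def using bl_mv by (simp add: bounded_linear_Blinfun_apply)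

lemma Lm_add: "Lm (A + B) = Lm A + Lm B"
  by (rule blinfun_eqI) (simp add: plus_blinfun.rep_eq matrix_vector_mult_def vec_eq_iff sum.distrib algebra_simps)

lemma Lm_scaleR: "Lm (c *\<^sub>R A) = c *\<^sub>R Lm A"
  by (rule blinfun_eqI) (simp add: scaleR_blinfun.rep_eq matrix_vector_mult_def vec_eq_iff scaleR_sum_right)

lemma Lm_mult: "Lm (A ** B) = Lm A o\<^sub>L Lm B"
  by (rule blinfun_eqI) (simp add: matrix_vector_mul_assoc)

lemma Lm_one: "Lm (mat 1) = id_blinfun"
  by (rule blinfun_eqI) simp

lemma entry_Lm: "norm ((A::'k::finite cmat) $ i $ j) \<le> norm (Lm A)"
proof -
  have "A $ i $ j = (A *v axis j 1) $ i"
    by (simp add: matrix_vector_mult_def axis_def if_distrib cong: if_cong)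
  also have "norm \<dots> \<le> norm (A *v axis j 1)" by (rule Finite_Cartesian_Product.norm_nth_le[where x="A *v axis j (1::complex)" and i=i])
  also have "\<dots> = norm (blinfun_apply (Lm A) (axis j 1))" by simp
  also have "\<dots> \<le> norm (Lm A) * norm (axis j (1::complex))" by (rule norm_blinfun)
  moreover have "norm (axis j (1::complex)) = 1"
    by (simp add: norm_vec_def L2_set_def axis_def if_distrib if_distribR cong: if_cong)
  ultimately show ?thesis by simp
qed

lemma norm_vec_l1: "norm (x::'a::real_normed_vector^'n::finite) \<le> (\<Sum>i\<in>UNIV. norm (x $ i))"
  by (simp add: norm_vec_def L2_set_le_sum)

lemma norm_Lm_lower: "norm (A::'k::finite cmat) \<le> of_nat (CARD('k) * CARD('k)) * norm (Lm A)"
proof -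
  have "norm A \<le> (\<Sum>i\<in>UNIV. norm (A $ i))" by (rule norm_vec_l1)
  also have "\<dots> \<le> (\<Sum>i\<in>(UNIV::'k set). \<Sum>j\<in>(UNIV::'k set). norm (A $ i $ j))"
    by (rule sum_mono) (rule norm_vec_l1)
  also have "\<dots> \<le> (\<Sum>i\<in>(UNIV::'k set). \<Sum>j\<in>(UNIV::'k set). norm (Lm A))"
    by (intro sum_mono entry_Lm)
  also have "\<dots> = of_nat (CARD('k) * CARD('k)) * norm (Lm A)" by simp
  finally show ?thesis .
qed

lemma linear_Lm: "linear Lm"
  by (rule linearI) (simp_all add: Lm_add Lm_scaleR)

lemma bl_Lm: "bounded_linear (Lm :: 'k::finite cmat \<Rightarrow> _)"
  using linear_Lm linear_conv_bounded_linear by blast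

lemma Lm_inj: "Lm A = Lm B \<Longrightarrow> A = B"
proof -
  assume "Lm A = Lm B"
  then have "Lm (A - B) = 0" using linear_Lm by (simp add: linear_diff[OF linear_Lm])
  then have "norm (A - B) \<le> 0" using norm_Lm_lower[of "A - B"] by simp
  then show ?thesis by simp
qed


lemma matrix_add_rdistrib': "((A + B) ** C) = (A ** C) + (B ** (C::'a::semiring_1^'p^'n))"
  by (vector matrix_matrix_mult_def sum.distrib[symmetric] field_simps)

typedef 'k M = "UNIV :: 'k::finite cmat set" by simp
setup_lifting type_definition_M

instantiation M :: (finite) real_vector begin
lift_definition zero_M :: "'a M" is 0 .
lift_definition plus_M :: "'a M \<Rightarrow> 'a M \<Rightarrow> 'a M" is "(+)" .
lift_definition minus_M :: "'a M \<Rightarrow> 'a M \<Rightarrow> 'a M" is "(-)" .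
lift_definition uminus_M :: "'a M \<Rightarrow> 'a M" is "uminus" .
lift_definition scaleR_M :: "real \<Rightarrow> 'a M \<Rightarrow> 'a M" is "scaleR" .
instance by standard (transfer; simp add: algebra_simps)+
end

instantiation M :: (finite) real_normed_vector begin
lift_definition norm_M :: "'a M \<Rightarrow> real" is "\<lambda>A. norm (Lm A)" .
definition sgn_M :: "'a M \<Rightarrow> 'a M" where "sgn_M x = inverse (norm x) *\<^sub>R x"
definition dist_M :: "'a M \<Rightarrow> 'a M \<Rightarrow> real" where "dist_M x y = norm (x - y)"
definition uniformity_M :: "('a M \<times> 'a M) filter" where
  "uniformity_M = (INF e\<in>{0 <..}. principal {(x, y). dist x y < e})"
definition open_M :: "'a M set \<Rightarrow> bool" where
  "open_M S = (\<forall>x\<in>S. \<forall>\<^sub>F (x', y) in uniformity. x' = x \<longrightarrow> y \<in> S)"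
instance
proof
  fix x y :: "'a M" and a :: real
  show "norm x = 0 \<longleftrightarrow> x = 0"
    by transfer (metis Lm_inj linear_0 linear_Lm norm_eq_zero)
  show "norm (x + y) \<le> norm x + norm y"
    by transfer (simp add: Lm_add norm_triangle_ineq)
  show "norm (a *\<^sub>R x) = \<bar>a\<bar> * norm x"
    by transfer (simp add: Lm_scaleR)
qed (simp_all add: sgn_M_def dist_M_def uniformity_M_def open_M_def)
end

lemma norm_M: "norm x = norm (Lm (Rep_M x))"
  by transfer simp

lemma Rep_M_bound: "norm (Rep_M x) \<le> of_nat (CARD('k) * CARD('k)) * norm (x :: 'k::finite M)"
  using norm_Lm_lower norm_M by metis

lemma Rep_M_diff: "Rep_M (x - y) = Rep_M x - Rep_M y" by transfer simp
lemma Rep_M_add: "Rep_M (x + y) = Rep_M x + Rep_M y" by transfer simp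
lemma Rep_M_scaleR: "Rep_M (c *\<^sub>R x) = c *\<^sub>R Rep_M x" by transfer simp

lemma bl_Rep_M: "bounded_linear (Rep_M :: 'k::finite M \<Rightarrow> 'k cmat)"
proof
  show "\<exists>K. \<forall>x::'k M. norm (Rep_M x) \<le> norm x * K"
    using Rep_M_bound by (metis mult.commute)
qed (simp_all add: Rep_M_add Rep_M_scaleR)

lemma bl_Abs_M: "bounded_linear (Abs_M :: 'k::finite cmat \<Rightarrow> 'k M)"
proof -
  obtain K where K: "\<And>A::'k cmat. norm (Lm A) \<le> norm A * K"
    using bounded_linear.bounded[OF bl_Lm] by blast
  show ?thesis
  proof
    show "\<exists>K. \<forall>x::'k cmat. norm (Abs_M x) \<le> norm x * K"
      using K by (auto simp: norm_M Abs_M_inverse)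
  qed (simp_all add: plus_M.abs_eq scaleR_M.abs_eq)
qed

instantiation M :: (finite) ring_1 begin
lift_definition one_M :: "'a M" is "mat 1" .
lift_definition times_M :: "'a M \<Rightarrow> 'a M \<Rightarrow> 'a M" is "(**)" .
instance
proof
  fix a b c :: "'a M"
  show "a * b * c = a * (b * c)" by transfer (simp add: matrix_mul_assoc)
  show "(a + b) * c = a * c + b * c" by transfer (simp add: matrix_add_rdistrib')
  show "a * (b + c) = a * b + a * c" by transfer (simp add: matrix_add_ldistrib)
  show "1 * a = a" by transfer simp
  show "a * 1 = a" by transfer simp
  show "(0::'a M) \<noteq> 1"
  proof transfer
    obtain i :: 'a where True by blast
    have "(mat 1 :: 'a cmat) $ i $ i = 1" by (simp add: mat_def)
    then show "(0::'a cmat) \<noteq> mat 1" by auto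
  qed
qed
end

instance M :: (finite) real_normed_algebra_1
proof
  fix x y :: "'a M" and a :: real
  show "a *\<^sub>R x * y = a *\<^sub>R (x * y)" by transfer (simp add: scalar_matrix_assoc)
  show "x * a *\<^sub>R y = a *\<^sub>R (x * y)" by transfer (simp add: matrix_scalar_ac scalar_matrix_assoc)
  show "norm (x * y) \<le> norm x * norm y" by transfer (simp add: Lm_mult norm_blinfun_compose)
  show "norm (1::'a M) = 1" by transfer (simp add: Lm_one)
qed

instance M :: (finite) banach
proof
  fix X :: "nat \<Rightarrow> 'a M"
  assume C: "Cauchy X"
  have "Cauchy (\<lambda>n. Rep_M (X n))"
    using bounded_linear.Cauchy[OF bl_Rep_M C] .
  then obtain A where A: "(\<lambda>n. Rep_M (X n)) \<longlonglongrightarrow> A"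
    using Cauchy_convergent_iff convergent_def by blast
  have "(\<lambda>n. Abs_M (Rep_M (X n))) \<longlonglongrightarrow> Abs_M A"
    using bounded_linear.tendsto[OF bl_Abs_M A] .
  then show "convergent X" by (auto simp: Rep_M_inverse convergent_def)
qed


lemma pow_diff_bound:
  fixes a b :: "'a::real_normed_algebra_1"
  assumes "norm a \<le> K" "norm b \<le> K"
  shows "norm (a ^ Suc n - b ^ Suc n) \<le> real (Suc n) * norm (a - b) * K ^ n"
proof (induction n)
  case 0 then show ?case by simp
next
  case (Suc n)
  have K0: "0 \<le> K" using assms(1) norm_ge_zero order_trans by blast
  have eq: "a ^ Suc (Suc n) - b ^ Suc (Suc n) = a * (a ^ Suc n - b ^ Suc n) + (a - b) * b ^ Suc n"
    by (simp add: algebra_simps)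
  have "norm (a ^ Suc (Suc n) - b ^ Suc (Suc n)) \<le> norm a * norm (a ^ Suc n - b ^ Suc n) + norm (a - b) * norm (b ^ Suc n)"
    unfolding eq by (metis norm_triangle_le norm_mult_ineq add_mono)
  also have "\<dots> \<le> K * (real (Suc n) * norm (a - b) * K ^ n) + norm (a - b) * K ^ Suc n"
  proof (intro add_mono mult_mono)
    show "norm (b ^ Suc n) \<le> K ^ Suc n"
      by (metis assms(2) norm_ge_zero norm_power_ineq order_trans power_mono)
  qed (use assms Suc.IH K0 in auto)
  also have "\<dots> = real (Suc (Suc n)) * norm (a - b) * K ^ Suc n"
    by (simp add: algebra_simps)
  finally show ?case .
qed

lemma exp_scaleR_nat:
  fixes x :: "'a::{real_normed_algebra_1,banach}"
  shows "exp (real n *\<^sub>R x) = exp x ^ n"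
proof (induction n)
  case 0 then show ?case by simp
next
  case (Suc n)
  have "exp (real (Suc n) *\<^sub>R x) = exp (x + real n *\<^sub>R x)" by (simp add: algebra_simps)
  also have "\<dots> = exp x * exp (real n *\<^sub>R x)"
    by (rule exp_add_commuting) (simp add: mult_scaleR_right mult_scaleR_left)
  finally show ?case using Suc by simp
qed

lemma curve_limit:
  fixes \<gamma> :: "real \<Rightarrow> 'a::{real_normed_algebra_1,banach}"
  assumes g0: "\<gamma> 0 = 1" and gd: "(\<gamma> has_vector_derivative X) (at 0)"
  shows "(\<lambda>n. \<gamma> (t / real (Suc n)) ^ Suc n) \<longlonglongrightarrow> exp (t *\<^sub>R X)"
proof (rule LIMSEQ_I)
  fix r :: real assume r: "0 < r"
  define h where "h s = exp (s *\<^sub>R X) - \<gamma> s" for s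
  have "((\<lambda>s. exp (s *\<^sub>R X)) has_vector_derivative exp (0 *\<^sub>R X) * X) (at 0)"
    by (rule exp_scaleR_has_vector_derivative_right)
  then have hd: "(h has_vector_derivative 0) (at 0)"
    unfolding h_def using has_vector_derivative_diff[OF _ gd] by fastforce
  have h0: "h 0 = 0" by (simp add: h_def g0)
  define C where "C = exp (\<bar>t\<bar> * (norm X + 1))"
  have C1: "1 \<le> C" unfolding C_def by simp
  define e where "e = min 1 (r / (2 * (\<bar>t\<bar> + 1) * C))"
  have e0: "0 < e" using r C1 by (simp add: e_def)
  from hd e0 obtain d where d: "d > 0"
    and hb: "\<And>s. norm s < d \<Longrightarrow> norm (h s - h 0 - s *\<^sub>R 0) \<le> e * norm s"
    unfolding has_vector_derivative_def has_derivative_at_alt by (metis diff_zero)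
  have hb': "norm (h s) \<le> e * \<bar>s\<bar>" if "\<bar>s\<bar> < d" for s
    using hb[of s] that h0 by simp
  obtain N :: nat where N: "\<bar>t\<bar> / d < real N" using reals_Archimedean2 by blast
  show "\<exists>no. \<forall>n\<ge>no. norm (\<gamma> (t / real (Suc n)) ^ Suc n - exp (t *\<^sub>R X)) < r"
  proof (intro exI allI impI)
    fix n assume n: "N \<le> n"
    define s where "s = t / real (Suc n)"
    have sn: "real (Suc n) * s = t" by (simp add: s_def)
    have as: "\<bar>s\<bar> = \<bar>t\<bar> / real (Suc n)" by (simp add: s_def)
    have "\<bar>t\<bar> / d < real (Suc n)" using N n by simp
    then have "\<bar>t\<bar> < real (Suc n) * d" using d by (simp add: field_simps)
    then have sd: "\<bar>s\<bar> < d" unfolding as by (simp add: field_simps mult.commute)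
    have hs: "norm (h s) \<le> e * \<bar>s\<bar>" using hb'[OF sd] .
    have e1: "e \<le> 1" by (simp add: e_def)
    have "e * \<bar>s\<bar> \<le> \<bar>s\<bar>" using e1 e0 by (simp add: mult_left_le_one_le)
    then have hs1: "norm (h s) \<le> \<bar>s\<bar>" using hs by linarith
    define K where "K = exp (\<bar>s\<bar> * (norm X + 1))"
    have K1: "1 \<le> K" unfolding K_def by simp
    have na: "norm (exp (s *\<^sub>R X)) \<le> exp (\<bar>s\<bar> * norm X)"
      using norm_exp[of "s *\<^sub>R X"] by simp
    have aK: "norm (exp (s *\<^sub>R X)) \<le> K"
    proof -
      have "\<bar>s\<bar> * norm X \<le> \<bar>s\<bar> * (norm X + 1)" by (simp add: algebra_simps)
      then show ?thesis using na unfolding K_def by (meson exp_le_cancel_iff order_trans)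
    qed
    have "norm (\<gamma> s) = norm (exp (s *\<^sub>R X) - h s)" by (simp add: h_def)
    also have "\<dots> \<le> exp (\<bar>s\<bar> * norm X) + \<bar>s\<bar>"
      using na hs1 norm_triangle_ineq4[of "exp (s *\<^sub>R X)" "h s"] by linarith
    also have "\<dots> \<le> exp (\<bar>s\<bar> * norm X) * (1 + \<bar>s\<bar>)"
    proof -
      have "1 \<le> exp (\<bar>s\<bar> * norm X)" by simp
      then have "\<bar>s\<bar> \<le> exp (\<bar>s\<bar> * norm X) * \<bar>s\<bar>"
        using mult_right_mono[of 1 "exp (\<bar>s\<bar> * norm X)" "\<bar>s\<bar>"] by simp
      then show ?thesis by (simp add: distrib_left)
    qed
    also have "\<dots> \<le> exp (\<bar>s\<bar> * norm X) * exp \<bar>s\<bar>"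
      by (intro mult_left_mono) simp_all
    also have "\<dots> = K" unfolding K_def by (simp add: exp_add[symmetric] algebra_simps)
    finally have bK: "norm (\<gamma> s) \<le> K" .
    have pw: "exp (s *\<^sub>R X) ^ Suc n = exp (t *\<^sub>R X)"
      using exp_scaleR_nat[of "Suc n" "s *\<^sub>R X"] sn by simp
    have KC: "K ^ n \<le> C"
    proof -
      have "K ^ n \<le> K ^ Suc n" using K1 by (simp add: power_increasing)
      also have "K ^ Suc n = exp (real (Suc n) * (\<bar>s\<bar> * (norm X + 1)))"
        unfolding K_def by (rule exp_of_nat_mult[symmetric, simplified])
      also have "real (Suc n) * (\<bar>s\<bar> * (norm X + 1)) = \<bar>t\<bar> * (norm X + 1)"
      proof -
        have "real (Suc n) * \<bar>s\<bar> = \<bar>t\<bar>" using as by simp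
        then show ?thesis by (metis mult.assoc)
      qed
      finally show ?thesis unfolding C_def .
    qed
    have "norm (\<gamma> s ^ Suc n - exp (t *\<^sub>R X)) = norm (exp (s *\<^sub>R X) ^ Suc n - \<gamma> s ^ Suc n)"
      by (metis pw norm_minus_commute)
    also have "\<dots> \<le> real (Suc n) * norm (exp (s *\<^sub>R X) - \<gamma> s) * K ^ n"
      by (rule pow_diff_bound[OF aK bK])
    also have "\<dots> \<le> real (Suc n) * (e * \<bar>s\<bar>) * C"
      using hs KC e0 K1 by (intro mult_mono) (simp_all add: h_def)
    also have "\<dots> = e * \<bar>t\<bar> * C" using as by (simp add: field_simps)
    also have "\<dots> \<le> (r / (2 * (\<bar>t\<bar> + 1) * C)) * \<bar>t\<bar> * C"
      using C1 by (intro mult_right_mono) (simp_all add: e_def)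
    also have "\<dots> = r * \<bar>t\<bar> / (2 * (\<bar>t\<bar> + 1))"
    proof -
      have "C \<noteq> 0" using C1 by simp
      then show ?thesis by (simp add: divide_simps mult.commute mult.left_commute)
    qed
    also have "\<dots> < r"
    proof -
      have "0 \<le> r * \<bar>t\<bar>" using r by simp
      then have "0 < r * \<bar>t\<bar> + r * 2" using r by (intro add_nonneg_pos) simp_all
      then show ?thesis using r by (simp add: field_simps)
    qed
    finally show "norm (\<gamma> (t / real (Suc n)) ^ Suc n - exp (t *\<^sub>R X)) < r" by (simp add: s_def)
  qed
qed


lemma Rep_M_mult: "Rep_M (x * y) = Rep_M x ** Rep_M y" by transfer simp
lemma Rep_M_one: "Rep_M 1 = mat 1" by transfer simp
lemma Rep_M_zero: "Rep_M 0 = 0" by transfer simp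
lemma Abs_M_scaleR: "Abs_M (c *\<^sub>R A) = c *\<^sub>R Abs_M A" by (simp add: scaleR_M.abs_eq)
lemma Abs_M_one: "Abs_M (mat 1) = 1" by (simp add: one_M.abs_eq)

lemma Rep_M_power: "Rep_M (x ^ n) = matpow (Rep_M x) n"
  by (induction n) (simp_all add: Rep_M_one Rep_M_mult)

lemma mexp_eq: "mexp (A::'k::finite cmat) = Rep_M (exp (Abs_M A))"
proof -
  let ?x = "Abs_M A"
  have "(\<lambda>n. ?x ^ n /\<^sub>R fact n) sums exp ?x"
    unfolding exp_def by (rule summable_sums[OF summable_exp_generic])
  from bounded_linear.sums[OF bl_Rep_M this]
  have "(\<lambda>n. Rep_M (?x ^ n /\<^sub>R fact n)) sums Rep_M (exp ?x)" .
  moreover have "Rep_M (?x ^ n /\<^sub>R fact n) = (1 / fact n) *\<^sub>R matpow A n" for n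
    by (simp add: Rep_M_scaleR Rep_M_power Abs_M_inverse divide_inverse)
  ultimately have "(\<lambda>n. (1 / fact n) *\<^sub>R matpow A n) sums Rep_M (exp ?x)" by simp
  then show ?thesis unfolding mexp_def by (rule sums_unique[symmetric])
qed

lemma mexp_zero: "mexp (0::'k::finite cmat) = mat 1"
  by (simp add: mexp_eq zero_M.abs_eq[symmetric] Rep_M_one)

lemma mexp_invertible: "invertible (mexp (A::'k::finite cmat))"
proof -
  have m: "Abs_M (- A) = - Abs_M A" by (simp add: uminus_M.abs_eq)
  have "mexp A ** mexp (- A) = Rep_M (exp (Abs_M A) * exp (- Abs_M A))"
    by (simp only: mexp_eq Rep_M_mult m)
  also have "\<dots> = mat 1" by (simp only: exp_minus_inverse Rep_M_one)
  finally have 1: "mexp A ** mexp (- A) = mat 1" .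
  have "mexp (- A) ** mexp A = Rep_M (exp (- Abs_M A) * exp (- (- Abs_M A)))"
    by (simp only: mexp_eq Rep_M_mult m minus_minus)
  also have "\<dots> = mat 1" by (simp only: exp_minus_inverse Rep_M_one)
  finally have 2: "mexp (- A) ** mexp A = mat 1" .
  from 1 2 show ?thesis unfolding invertible_def by blast
qed

lemma group_matpow:
  assumes "matrix_lie_group G" "g \<in> G" shows "matpow g n \<in> G"
  using assms by (induction n) (auto simp: matrix_lie_group_def)

lemma curve_lie:
  fixes G :: "'k::finite cmat set"
  assumes G: "matrix_lie_group G" and gG: "\<And>t. \<gamma> t \<in> G" and g0: "\<gamma> 0 = mat 1"
    and gd: "(\<gamma> has_vector_derivative X) (at 0)"
  shows "X \<in> lie_alg G"
  unfolding lie_alg_def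
proof (intro CollectI allI)
  fix t :: real
  let ?g = "\<lambda>s. Abs_M (\<gamma> s)"
  have "(?g has_vector_derivative Abs_M X) (at 0)"
    by (rule bounded_linear.has_vector_derivative[OF bl_Abs_M gd])
  from curve_limit[OF _ this, of t] g0
  have "(\<lambda>n. ?g (t / real (Suc n)) ^ Suc n) \<longlonglongrightarrow> exp (t *\<^sub>R Abs_M X)"
    by (simp add: Abs_M_one)
  from bounded_linear.tendsto[OF bl_Rep_M this]
  have lim0: "(\<lambda>n. Rep_M (?g (t / real (Suc n)) ^ Suc n)) \<longlonglongrightarrow> Rep_M (exp (t *\<^sub>R Abs_M X))" .
  have e1: "\<And>s n. Rep_M (?g s ^ n) = matpow (\<gamma> s) n"
    by (simp only: Rep_M_power Abs_M_inverse UNIV_I)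
  have e2: "Rep_M (exp (t *\<^sub>R Abs_M X)) = mexp (t *\<^sub>R X)"
    by (simp only: mexp_eq Abs_M_scaleR)
  have lim: "(\<lambda>n. matpow (\<gamma> (t / real (Suc n))) (Suc n)) \<longlonglongrightarrow> mexp (t *\<^sub>R X)"
    using lim0 unfolding e1 e2 .
  obtain T where T: "closed T" "G = {A. invertible A} \<inter> T"
    using G unfolding matrix_lie_group_def closedin_closed by blast
  have "\<And>n. matpow (\<gamma> (t / real (Suc n))) (Suc n) \<in> T"
    using group_matpow[OF G gG] T by blast
  from closed_sequentially[OF T(1) this lim]
  show "mexp (t *\<^sub>R X) \<in> G" using T mexp_invertible by blast
qed

lemma lie_zero: assumes "matrix_lie_group G" shows "0 \<in> lie_alg G"
  using assms by (simp add: lie_alg_def mexp_zero matrix_lie_group_def)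

lemma lie_scale: "X \<in> lie_alg G \<Longrightarrow> c *\<^sub>R X \<in> lie_alg G"
proof -
  assume X: "X \<in> lie_alg G"
  have "mexp (t *\<^sub>R (c *\<^sub>R X)) \<in> G" for t
    using X unfolding lie_alg_def by (simp add: scaleR_scaleR)
  then show ?thesis unfolding lie_alg_def by blast
qed

lemma lie_add:
  fixes G :: "'k::finite cmat set"
  assumes G: "matrix_lie_group G" and X: "X \<in> lie_alg G" and Y: "Y \<in> lie_alg G"
  shows "X + Y \<in> lie_alg G"
proof -
  let ?X = "Abs_M X" and ?Y = "Abs_M Y"
  define \<gamma> where "\<gamma> t = mexp (t *\<^sub>R X) ** mexp (t *\<^sub>R Y)" for t
  have geq: "\<gamma> = (\<lambda>t. Rep_M (exp (t *\<^sub>R ?X) * exp (t *\<^sub>R ?Y)))"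
    by (auto simp: \<gamma>_def mexp_eq Rep_M_mult Abs_M_scaleR)
  have "((\<lambda>t. exp (t *\<^sub>R ?X) * exp (t *\<^sub>R ?Y)) has_vector_derivative
      exp (0 *\<^sub>R ?X) * (exp (0 *\<^sub>R ?Y) * ?Y) + (exp (0 *\<^sub>R ?X) * ?X) * exp (0 *\<^sub>R ?Y)) (at 0)"
    by (intro has_vector_derivative_mult exp_scaleR_has_vector_derivative_right)
  then have "((\<lambda>t. exp (t *\<^sub>R ?X) * exp (t *\<^sub>R ?Y)) has_vector_derivative ?X + ?Y) (at 0)"
    by (simp add: add.commute)
  from bounded_linear.has_vector_derivative[OF bl_Rep_M this]
  have "(\<gamma> has_vector_derivative X + Y) (at 0)"
    unfolding geq by (simp add: Rep_M_add Abs_M_inverse)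
  moreover have "\<gamma> t \<in> G" for t
    using X Y G unfolding \<gamma>_def lie_alg_def matrix_lie_group_def by blast
  moreover have "\<gamma> 0 = mat 1" by (simp add: \<gamma>_def mexp_zero)
  ultimately show ?thesis using curve_lie[OF G] by blast
qed

lemma lie_sum:
  fixes G :: "'k::finite cmat set"
  assumes G: "matrix_lie_group G" and "finite I" and "\<And>i. i \<in> I \<Longrightarrow> f i \<in> lie_alg G"
  shows "(\<Sum>i\<in>I. f i) \<in> lie_alg G"
  using assms(2,3) by (induction I rule: finite_induct) (auto intro: lie_add[OF G] lie_zero[OF G])


lemma relevant_mono: "relevant m N c \<Longrightarrow> N \<le> N' \<Longrightarrow> relevant m N' c"
  by (cases c) auto

lemma dep_mono: "depends_only m N f \<Longrightarrow> N \<le> N' \<Longrightarrow> depends_only m N' f"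
  unfolding depends_only_def by (meson relevant_mono)

lemma ord_le: "depends_only m N f \<Longrightarrow> ord m f \<le> N"
  unfolding ord_def by (rule Least_le)

lemma dep_ord: "depends_only m N f \<Longrightarrow> depends_only m (ord m f) f"
  unfolding ord_def by (rule LeastI)

lemma dep_upd: "depends_only m N f \<Longrightarrow> \<not> relevant m N c \<Longrightarrow> f (p(c := t)) = f p"
proof -
  assume d: "depends_only m N f" and nr: "\<not> relevant m N c"
  have "\<forall>c'. relevant m N c' \<longrightarrow> (p(c := t)) c' = p c'" using nr by auto
  then show ?thesis using d unfolding depends_only_def by blast
qed

lemma pd_irrel: "depends_only m N f \<Longrightarrow> \<not> relevant m N c \<Longrightarrow> pd c f p = 0"
  unfolding pd_def by (simp add: dep_upd)

lemma finite_thcoords: "finite (thcoords m N)"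
proof -
  have "thcoords m N \<subseteq> {1..m} \<times> {0..N} \<times> {0..N}" by (auto simp: thcoords_def)
  then show ?thesis by (rule finite_subset) simp
qed

lemma thcoords_mono: "N \<le> N' \<Longrightarrow> thcoords m N \<subseteq> thcoords m N'"
  by (auto simp: thcoords_def)

lemma relevant_Th: "relevant m N (Th n a b) \<longleftrightarrow> (n, a, b) \<in> thcoords m N"
  by (simp add: thcoords_def)

lemma TD_N:
  assumes "depends_only m N f"
  shows "TD m \<alpha> f p = pd (xc \<alpha>) f p +
     (\<Sum>(n, a, b) \<in> thcoords m N. p (shift \<alpha> (n, a, b)) *\<^sub>R pd (Th n a b) f p)"
proof -
  have le: "ord m f \<le> N" using ord_le[OF assms] .
  have d: "depends_only m (ord m f) f" using dep_ord[OF assms] .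
  have "(\<Sum>(n, a, b) \<in> thcoords m (ord m f). p (shift \<alpha> (n, a, b)) *\<^sub>R pd (Th n a b) f p)
      = (\<Sum>(n, a, b) \<in> thcoords m N. p (shift \<alpha> (n, a, b)) *\<^sub>R pd (Th n a b) f p)"
  proof (rule sum.mono_neutral_left[OF finite_thcoords thcoords_mono[OF le]])
    show "\<forall>i\<in>thcoords m N - thcoords m (ord m f).
       (case i of (n, a, b) \<Rightarrow> p (shift \<alpha> (n, a, b)) *\<^sub>R pd (Th n a b) f p) = 0"
      using pd_irrel[OF d] relevant_Th by fastforce
  qed
  then show ?thesis unfolding TD_def by simp
qed

lemma prw_N:
  assumes "depends_only m N f"
  shows "prw m Q f p = (\<Sum>(n, a, b) \<in> thcoords m N. TDJ m a b (Q n) p *\<^sub>R pd (Th n a b) f p)"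
proof -
  have le: "ord m f \<le> N" using ord_le[OF assms] .
  have d: "depends_only m (ord m f) f" using dep_ord[OF assms] .
  show ?thesis unfolding prw_def
  proof (rule sum.mono_neutral_left[OF finite_thcoords thcoords_mono[OF le]])
    show "\<forall>i\<in>thcoords m N - thcoords m (ord m f).
       (case i of (n, a, b) \<Rightarrow> TDJ m a b (Q n) p *\<^sub>R pd (Th n a b) f p) = 0"
      using pd_irrel[OF d] relevant_Th by fastforce
  qed
qed

lemma dep_pd: "depends_only m N f \<Longrightarrow> depends_only m N (pd c f)"
proof -
  assume d: "depends_only m N f"
  show ?thesis unfolding depends_only_def
  proof (intro allI impI)
    fix p q :: jet assume pq: "\<forall>c. relevant m N c \<longrightarrow> p c = q c"
    show "pd c f p = pd c f q"
    proof (cases "relevant m N c")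
      case True
      have "f (p(c := t)) = f (q(c := t))" for t
      proof -
        have "\<forall>c'. relevant m N c' \<longrightarrow> (p(c := t)) c' = (q(c := t)) c'" using pq by auto
        then show ?thesis using d unfolding depends_only_def by blast
      qed
      then have "(\<lambda>t. f (p(c := t))) = (\<lambda>t. f (q(c := t)))" by (rule ext)
      then show ?thesis unfolding pd_def using True pq by simp
    next
      case False then show ?thesis using pd_irrel[OF d] by simp
    qed
  qed
qed

lemma dep_comb:
  assumes "depends_only m N f" "depends_only m N g"
  shows "depends_only m N (\<lambda>p. h (f p) (g p))"
  using assms unfolding depends_only_def by (metis (no_types))

lemma dep_const: "depends_only m N (\<lambda>p. k)"
  unfolding depends_only_def by simp

lemma dep_coord: "relevant m N c \<Longrightarrow> depends_only m N (\<lambda>p. p c)"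
  unfolding depends_only_def by simp

lemma dep_sum:
  assumes "finite I" "\<And>i. i \<in> I \<Longrightarrow> depends_only m N (f i)"
  shows "depends_only m N (\<lambda>p. \<Sum>i\<in>I. f i p)"
  unfolding depends_only_def
proof (intro allI impI)
  fix p q :: jet assume "\<forall>c. relevant m N c \<longrightarrow> p c = q c"
  then have "f i p = f i q" if "i \<in> I" for i using assms(2)[OF that] unfolding depends_only_def by blast
  then show "(\<Sum>i\<in>I. f i p) = (\<Sum>i\<in>I. f i q)" by (rule sum.cong[OF refl])
qed

lemma dep_TD:
  assumes "depends_only m N f"
  shows "depends_only m (Suc N) (TD m \<alpha> f)"
proof -
  have e: "TD m \<alpha> f = (\<lambda>p. pd (xc \<alpha>) f p +
     (\<Sum>i \<in> thcoords m N. (case i of (n, a, b) \<Rightarrow> p (shift \<alpha> (n, a, b)) *\<^sub>R pd (Th n a b) f p)))"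
    using TD_N[OF assms] by (intro ext) (simp add: case_prod_beta)
  have sh: "relevant m (Suc N) (shift \<alpha> i)" if "i \<in> thcoords m N" for i
    using that by (cases \<alpha> rule: xc.cases; cases i) (auto simp: thcoords_def)
  have dp: "depends_only m (Suc N) (pd c f)" for c
    using dep_mono[OF dep_pd[OF assms]] by simp
  have trm: "depends_only m (Suc N) (\<lambda>p. case i of (n, a, b) \<Rightarrow> p (shift \<alpha> (n, a, b)) *\<^sub>R pd (Th n a b) f p)"
    if "i \<in> thcoords m N" for i
  proof (cases i)
    case (fields n a b)
    show ?thesis unfolding fields
      using dep_comb[where h=scaleR, OF dep_coord[OF sh[OF that[unfolded fields]]] dp[of "Th n a b"]]
      by simp
  qed
  show ?thesis unfolding e
    by (rule dep_comb[where h="(+)", OF dp dep_sum[OF finite_thcoords trm]])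
qed


section \<open>Partial derivatives along lines\<close>

definition dl :: "(jet \<Rightarrow> 'v::real_normed_vector) \<Rightarrow> bool" where
  "dl f \<longleftrightarrow> (\<forall>c p. (\<lambda>t. f (p(c := t))) differentiable (at (p c)))"

lemma line_shift: "(\<lambda>t. f ((p(c := s))(c := t))) = (\<lambda>t. f (p(c := t)))"
  by simp

lemma hvd: "dl f \<Longrightarrow> ((\<lambda>t. f (p(c := t))) has_vector_derivative pd c f p) (at (p c))"
  unfolding dl_def pd_def using vector_derivative_works by blast

lemma hvd_at: "dl f \<Longrightarrow> ((\<lambda>t. f (p(c := t))) has_vector_derivative pd c f (p(c := s))) (at s)"
  using hvd[of f "p(c := s)" c] by simp

lemma pd_eqI:
  assumes "\<And>p. ((\<lambda>t. f (p(c := t))) has_vector_derivative D p) (at (p c))"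
  shows "pd c f = D"
  using assms unfolding pd_def by (intro ext) (rule vector_derivative_at)

lemma dl_I:
  assumes "\<And>c p. ((\<lambda>t. f (p(c := t))) has_vector_derivative D c p) (at (p c))"
  shows "dl f"
  using assms unfolding dl_def by (meson differentiableI_vector)

lemma pd_lin:
  assumes L: "bounded_linear L" and f: "dl f"
  shows "pd c (\<lambda>q. L (f q)) = (\<lambda>q. L (pd c f q))"
  by (rule pd_eqI) (rule bounded_linear.has_vector_derivative[OF L hvd[OF f]])

lemma dl_lin:
  assumes L: "bounded_linear L" and f: "dl f"
  shows "dl (\<lambda>q. L (f q))"
  by (rule dl_I) (rule bounded_linear.has_vector_derivative[OF L hvd[OF f]])

lemma pd_bil:
  assumes P: "bounded_bilinear P" and f: "dl f" and g: "dl g"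
  shows "pd c (\<lambda>q. P (f q) (g q)) = (\<lambda>q. P (f q) (pd c g q) + P (pd c f q) (g q))"
proof (rule pd_eqI)
  fix p
  from bounded_bilinear.has_vector_derivative[OF P hvd[OF f, of p c] hvd[OF g, of p c]]
  show "((\<lambda>t. P (f (p(c := t))) (g (p(c := t)))) has_vector_derivative
      P (f p) (pd c g p) + P (pd c f p) (g p)) (at (p c))" by simp
qed

lemma dl_bil:
  assumes P: "bounded_bilinear P" and f: "dl f" and g: "dl g"
  shows "dl (\<lambda>q. P (f q) (g q))"
  by (rule dl_I) (rule bounded_bilinear.has_vector_derivative[OF P hvd[OF f] hvd[OF g]])

lemma pd_add:
  assumes f: "dl f" and g: "dl g"
  shows "pd c (\<lambda>q. f q + g q) = (\<lambda>q. pd c f q + pd c g q)"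
  by (rule pd_eqI) (rule has_vector_derivative_add[OF hvd[OF f] hvd[OF g]])

lemma dl_add:
  assumes f: "dl f" and g: "dl g"
  shows "dl (\<lambda>q. f q + g q)"
  by (rule dl_I) (rule has_vector_derivative_add[OF hvd[OF f] hvd[OF g]])

lemma pd_diff:
  assumes f: "dl f" and g: "dl g"
  shows "pd c (\<lambda>q. f q - g q) = (\<lambda>q. pd c f q - pd c g q)"
  by (rule pd_eqI) (rule has_vector_derivative_diff[OF hvd[OF f] hvd[OF g]])

lemma dl_diff:
  assumes f: "dl f" and g: "dl g"
  shows "dl (\<lambda>q. f q - g q)"
  by (rule dl_I) (rule has_vector_derivative_diff[OF hvd[OF f] hvd[OF g]])

lemma pd_sum:
  assumes "finite I" "\<And>i. i \<in> I \<Longrightarrow> dl (f i)"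
  shows "pd c (\<lambda>q. \<Sum>i\<in>I. f i q) = (\<lambda>q. \<Sum>i\<in>I. pd c (f i) q)"
  by (rule pd_eqI) (rule has_vector_derivative_sum, rule hvd[OF assms(2)])

lemma dl_sum:
  assumes "finite I" "\<And>i. i \<in> I \<Longrightarrow> dl (f i)"
  shows "dl (\<lambda>q. \<Sum>i\<in>I. f i q)"
  by (rule dl_I) (rule has_vector_derivative_sum, rule hvd[OF assms(2)])

lemma pd_const: "pd c (\<lambda>q. k) = (\<lambda>q. 0)"
  by (rule pd_eqI) simp

lemma dl_const: "dl (\<lambda>q. k)"
  by (rule dl_I) (rule has_vector_derivative_const)

lemma coord_line: "(\<lambda>t. (p(c := t)) c') = (if c = c' then (\<lambda>t. t) else (\<lambda>t. p c'))"
  by auto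

lemma pd_coord: "pd c (\<lambda>q. q c') = (\<lambda>q. if c = c' then 1 else 0)"
  by (rule pd_eqI) (simp add: coord_line)

lemma dl_coord: "dl (\<lambda>q. q c')"
  unfolding dl_def coord_line by (auto intro: differentiable_const differentiable_ident)

section \<open>Smoothness\<close>

lemma ipd_snoc: "ipd (cs @ [c]) f = ipd cs (pd c f)"
  by (induction cs) auto

lemma smooth_iff:
  "smooth_jet f \<longleftrightarrow> continuous_on UNIV f \<and> dl f \<and> (\<forall>c. smooth_jet (pd c f))"
proof
  assume s: "smooth_jet f"
  have "continuous_on UNIV (ipd [] f)" "\<forall>c p. (\<lambda>t. ipd [] f (p(c := t))) differentiable at (p c)"
    using s unfolding smooth_jet_def by blast+
  moreover have "smooth_jet (pd c f)" for c
    using s unfolding smooth_jet_def by (metis ipd_snoc)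
  ultimately show "continuous_on UNIV f \<and> dl f \<and> (\<forall>c. smooth_jet (pd c f))"
    by (auto simp: dl_def)
next
  assume a: "continuous_on UNIV f \<and> dl f \<and> (\<forall>c. smooth_jet (pd c f))"
  show "smooth_jet f" unfolding smooth_jet_def
  proof (intro conjI allI)
    fix cs
    show "continuous_on UNIV (ipd cs f)"
    proof (cases cs rule: rev_exhaust)
      case Nil then show ?thesis using a by simp
    next
      case (snoc cs' c) then show ?thesis using a by (simp add: ipd_snoc smooth_jet_def)
    qed
    fix c p
    show "(\<lambda>t. ipd cs f (p(c := t))) differentiable at (p c)"
    proof (cases cs rule: rev_exhaust)
      case Nil then show ?thesis using a by (simp add: dl_def)
    next
      case (snoc cs' c') then show ?thesis using a by (simp add: ipd_snoc smooth_jet_def)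
    qed
  qed
qed

definition su :: "nat \<Rightarrow> (jet \<Rightarrow> 'v::real_normed_vector) \<Rightarrow> bool" where
  "su n f \<longleftrightarrow> (\<forall>cs. length cs \<le> n \<longrightarrow> continuous_on UNIV (ipd cs f) \<and> dl (ipd cs f))"

lemma smooth_su: "smooth_jet f \<longleftrightarrow> (\<forall>n. su n f)"
  unfolding smooth_jet_def su_def dl_def by blast

lemma su_mono: "su (Suc n) f \<Longrightarrow> su n f"
  unfolding su_def by auto

lemma su_pd: "su (Suc n) f \<Longrightarrow> su n (pd c f)"
  unfolding su_def by (metis ipd_snoc length_append_singleton not_less_eq_eq)

lemma su_0: "su n f \<Longrightarrow> continuous_on UNIV f \<and> dl f"
  unfolding su_def by (metis ipd.simps(1) le0 list.size(3))

lemma ipd_add: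
  assumes "su n f" "su n g" "length cs \<le> n"
  shows "ipd cs (\<lambda>q. f q + g q) = (\<lambda>q. ipd cs f q + ipd cs g q)"
  using assms(3)
proof (induction cs)
  case Nil then show ?case by simp
next
  case (Cons c cs)
  then have "length cs \<le> n" by simp
  then have "dl (ipd cs f)" "dl (ipd cs g)" using assms unfolding su_def by auto
  then show ?case using Cons by (simp add: pd_add)
qed

lemma su_add:
  assumes "su n f" "su n g"
  shows "su n (\<lambda>q. f q + g q)"
  unfolding su_def
proof (intro allI impI)
  fix cs :: "jc list" assume l: "length cs \<le> n"
  have "continuous_on UNIV (ipd cs f)" "continuous_on UNIV (ipd cs g)" "dl (ipd cs f)" "dl (ipd cs g)"
    using assms l unfolding su_def by auto
  then show "continuous_on UNIV (ipd cs (\<lambda>q. f q + g q)) \<and> dl (ipd cs (\<lambda>q. f q + g q))"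
    unfolding ipd_add[OF assms l] by (auto intro: continuous_on_add dl_add)
qed

lemma su_bil:
  assumes P: "bounded_bilinear P"
  shows "su n f \<Longrightarrow> su n g \<Longrightarrow> su n (\<lambda>q. P (f q) (g q))"
proof (induction n arbitrary: f g)
  case 0
  then have "continuous_on UNIV f" "dl f" "continuous_on UNIV g" "dl g" using su_0 by blast+
  then show ?case unfolding su_def
    by (auto intro: bounded_bilinear.continuous_on[OF P] dl_bil[OF P])
next
  case (Suc n)
  have f: "continuous_on UNIV f" "dl f" and g: "continuous_on UNIV g" "dl g"
    using su_0 Suc.prems by blast+
  show ?case unfolding su_def
  proof (intro allI impI)
    fix cs :: "jc list" assume l: "length cs \<le> Suc n"
    show "continuous_on UNIV (ipd cs (\<lambda>q. P (f q) (g q))) \<and> dl (ipd cs (\<lambda>q. P (f q) (g q)))"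
    proof (cases cs rule: rev_exhaust)
      case Nil then show ?thesis
        using f g by (auto intro: bounded_bilinear.continuous_on[OF P] dl_bil[OF P])
    next
      case (snoc cs' c)
      have l': "length cs' \<le> n" using l snoc by simp
      have "su n (\<lambda>q. P (f q) (pd c g q))"
        using Suc.IH[OF su_mono[OF Suc.prems(1)] su_pd[OF Suc.prems(2)]] .
      moreover have "su n (\<lambda>q. P (pd c f q) (g q))"
        using Suc.IH[OF su_pd[OF Suc.prems(1)] su_mono[OF Suc.prems(2)]] .
      ultimately have "su n (\<lambda>q. P (f q) (pd c g q) + P (pd c f q) (g q))" by (rule su_add)
      then show ?thesis using l' unfolding snoc ipd_snoc pd_bil[OF P f(2) g(2)] su_def by blast
    qed
  qed
qed

lemma su_lin:
  assumes L: "bounded_linear L"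
  shows "su n f \<Longrightarrow> su n (\<lambda>q. L (f q))"
proof (induction n arbitrary: f)
  case 0
  then have "continuous_on UNIV f" "dl f" using su_0 by blast+
  then show ?case unfolding su_def
    by (auto intro: bounded_linear.continuous_on[OF L] dl_lin[OF L])
next
  case (Suc n)
  have f: "continuous_on UNIV f" "dl f" using su_0 Suc.prems by blast+
  show ?case unfolding su_def
  proof (intro allI impI)
    fix cs :: "jc list" assume l: "length cs \<le> Suc n"
    show "continuous_on UNIV (ipd cs (\<lambda>q. L (f q))) \<and> dl (ipd cs (\<lambda>q. L (f q)))"
    proof (cases cs rule: rev_exhaust)
      case Nil then show ?thesis
        using f by (auto intro: bounded_linear.continuous_on[OF L] dl_lin[OF L])
    next
      case (snoc cs' c)
      have l': "length cs' \<le> n" using l snoc by simp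
      have "su n (\<lambda>q. L (pd c f q))" using Suc.IH[OF su_pd[OF Suc.prems]] .
      then show ?thesis using l' unfolding snoc ipd_snoc pd_lin[OF L f(2)] su_def by blast
    qed
  qed
qed

lemma sm_bil: "bounded_bilinear P \<Longrightarrow> smooth_jet f \<Longrightarrow> smooth_jet g \<Longrightarrow> smooth_jet (\<lambda>q. P (f q) (g q))"
  unfolding smooth_su using su_bil by blast

lemma sm_lin: "bounded_linear L \<Longrightarrow> smooth_jet f \<Longrightarrow> smooth_jet (\<lambda>q. L (f q))"
  unfolding smooth_su using su_lin by blast

lemma sm_add: "smooth_jet f \<Longrightarrow> smooth_jet g \<Longrightarrow> smooth_jet (\<lambda>q. f q + g q)"
  unfolding smooth_su using su_add by blast

lemma sm_pd: "smooth_jet f \<Longrightarrow> smooth_jet (pd c f)"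
  using smooth_iff by blast

lemma sm_dl: "smooth_jet f \<Longrightarrow> dl f"
  using smooth_iff by blast

lemma sm_cont: "smooth_jet f \<Longrightarrow> continuous_on UNIV f"
  using smooth_iff by blast

lemma sm_const: "smooth_jet (\<lambda>q. k)"
proof -
  have "ipd cs (\<lambda>q. k) = (if cs = [] then (\<lambda>q. k) else (\<lambda>q. 0))" for cs
    by (induction cs) (auto simp: pd_const)
  then show ?thesis unfolding smooth_jet_def by simp
qed

lemma sm_coord: "smooth_jet (\<lambda>q. q c)"
proof -
  have "smooth_jet (pd c' (\<lambda>q. q c))" for c'
    unfolding pd_coord by (cases "c' = c") (simp_all add: sm_const)
  then show ?thesis unfolding smooth_iff[of "\<lambda>q. q c"] using dl_coord by simp
qed

lemma sm_diff: "smooth_jet f \<Longrightarrow> smooth_jet g \<Longrightarrow> smooth_jet (\<lambda>q. f q - g q)"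
proof -
  assume "smooth_jet f" "smooth_jet g"
  moreover have "bounded_linear (\<lambda>x::'a. - x)" by (rule bounded_linear_minus[OF bounded_linear_ident])
  ultimately have "smooth_jet (\<lambda>q. f q + - g q)" using sm_add sm_lin by blast
  then show ?thesis by simp
qed

lemma sm_sum:
  assumes "finite I" "\<And>i. i \<in> I \<Longrightarrow> smooth_jet (f i)"
  shows "smooth_jet (\<lambda>q. \<Sum>i\<in>I. f i q)"
  using assms by (induction I rule: finite_induct) (auto intro: sm_add sm_const)


lemma l1: "(X::real) \<le> A + B \<Longrightarrow> A < X / 2 \<Longrightarrow> B < X / 2 \<Longrightarrow> False" by linarith
lemma abs_contra: "\<bar>(a::real) - x\<bar> < \<bar>x - y\<bar> / 2 \<Longrightarrow> \<bar>b - y\<bar> < \<bar>x - y\<bar> / 2 \<Longrightarrow> a = b \<Longrightarrow> False"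
  for a b x y :: real
proof -
  assume h: "\<bar>a - x\<bar> < \<bar>x - y\<bar> / 2" "\<bar>b - y\<bar> < \<bar>x - y\<bar> / 2" "a = b"
  have "x - y = (x - a) + (b - y)" using h(3) by simp
  then have "\<bar>x - y\<bar> \<le> \<bar>x - a\<bar> + \<bar>b - y\<bar>" by (metis abs_triangle_ineq)
  then have "\<bar>x - y\<bar> \<le> \<bar>a - x\<bar> + \<bar>b - y\<bar>" by (simp add: abs_minus_commute)
  then show False using h(1,2) by (rule l1)
qed

lemma cont_2d:
  fixes F :: "jet \<Rightarrow> real"
  assumes F: "continuous_on UNIV F" and e: "e > 0"
  shows "\<exists>d>0. \<forall>s t. \<bar>s - p0 c\<bar> < d \<longrightarrow> \<bar>t - p0 c'\<bar> < d \<longrightarrow>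
           \<bar>F ((p0(c := s))(c' := t)) - F ((p0(c := p0 c))(c' := p0 c'))\<bar> < e"
proof -
  define Pm where "Pm z = (p0(c := fst z))(c' := snd z)" for z :: "real \<times> real"
  have "continuous_on UNIV (\<lambda>z. Pm z i)" for i
    unfolding Pm_def by (cases "i = c'"; cases "i = c") (auto intro: continuous_intros)
  then have "continuous_on UNIV Pm" by (rule continuous_on_coordinatewise_then_product)
  then have "continuous_on UNIV (\<lambda>z. F (Pm z))"
    using F by (metis continuous_on_compose2 subset_UNIV)
  then have "isCont (\<lambda>z. F (Pm z)) (p0 c, p0 c')"
    using continuous_on_eq_continuous_at by blast
  then obtain d where d: "d > 0"
    and hd: "\<And>z. dist z (p0 c, p0 c') < d \<Longrightarrow> dist (F (Pm z)) (F (Pm (p0 c, p0 c'))) < e"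
    unfolding continuous_at_eps_delta using e by blast
  show ?thesis
  proof (intro exI[of _ "d / 2"] conjI allI impI)
    fix s t assume s: "\<bar>s - p0 c\<bar> < d / 2" and t: "\<bar>t - p0 c'\<bar> < d / 2"
    have "dist (s, t) (p0 c, p0 c') \<le> \<bar>s - p0 c\<bar> + \<bar>t - p0 c'\<bar>"
      unfolding dist_Pair_Pair dist_real_def using sqrt_sum_squares_le_sum_abs[of "\<bar>s - p0 c\<bar>" "\<bar>t - p0 c'\<bar>"] by simp
    also have "\<dots> < d" using s t by linarith
    finally show "\<bar>F ((p0(c := s))(c' := t)) - F ((p0(c := p0 c))(c' := p0 c'))\<bar> < e"
      using hd[of "(s, t)"] by (simp add: Pm_def dist_real_def)
  qed (use d in simp)
qed

lemma clairaut_real: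
  fixes f :: "jet \<Rightarrow> real"
  assumes sm: "smooth_jet f" and cc: "c \<noteq> c'"
  shows "pd c' (pd c f) p0 = pd c (pd c' f) p0"
proof (rule ccontr)
  define P where "P s t = (p0(c := s))(c' := t)" for s t
  define s0 where "s0 = p0 c"
  define t0 where "t0 = p0 c'"
  have P0: "P s0 t0 = p0" by (simp add: P_def s0_def t0_def)
  let ?f1 = "pd c f" and ?f2 = "pd c' f"
  let ?f12 = "pd c' (pd c f)" and ?f21 = "pd c (pd c' f)"
  have smf1: "smooth_jet ?f1" "smooth_jet ?f2" using sm sm_pd by blast+
  have Pc: "P u t = (P x t)(c := u)" for u x t
    using cc by (simp add: P_def fun_upd_twist)
  have Pc': "P x v = (P x y)(c' := v)" for x v y
    by (simp add: P_def)
  have Pxc: "(P x t) c = x" for x t using cc by (simp add: P_def)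
  have Pyc: "(P x t) c' = t" for x t by (simp add: P_def)
  have dc: "DERIV (\<lambda>u. g (P u t)) x :> pd c g (P x t)" if "smooth_jet g" for g :: "jet \<Rightarrow> real" and x t
  proof -
    have "((\<lambda>u. g ((P x t)(c := u))) has_vector_derivative pd c g (P x t)) (at ((P x t) c))"
      using hvd[OF sm_dl[OF that]] .
    then show ?thesis unfolding has_real_derivative_iff_has_vector_derivative
      by (simp add: Pxc Pc[symmetric])
  qed
  have dc': "DERIV (\<lambda>v. g (P x v)) y :> pd c' g (P x y)" if "smooth_jet g" for g :: "jet \<Rightarrow> real" and x y
  proof -
    have "((\<lambda>v. g ((P x y)(c' := v))) has_vector_derivative pd c' g (P x y)) (at ((P x y) c'))"
      using hvd[OF sm_dl[OF that]] .
    then show ?thesis unfolding has_real_derivative_iff_has_vector_derivative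
      by (simp add: Pyc Pc'[symmetric])
  qed
  define \<Delta> where "\<Delta> r = f (P (s0 + r) (t0 + r)) - f (P (s0 + r) t0) - f (P s0 (t0 + r)) + f (P s0 t0)" for r
  have A: "\<exists>\<xi> \<eta>. s0 < \<xi> \<and> \<xi> < s0 + r \<and> t0 < \<eta> \<and> \<eta> < t0 + r \<and> \<Delta> r = r * (r * ?f12 (P \<xi> \<eta>))"
    if r: "r > 0" for r
  proof -
    have "\<exists>\<xi>. s0 < \<xi> \<and> \<xi> < s0 + r \<and>
        (f (P (s0 + r) (t0 + r)) - f (P (s0 + r) t0)) - (f (P s0 (t0 + r)) - f (P s0 t0))
        = (s0 + r - s0) * (?f1 (P \<xi> (t0 + r)) - ?f1 (P \<xi> t0))"
      using r by (intro MVT2) (auto intro!: derivative_intros dc sm)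
    then obtain \<xi> where \<xi>: "s0 < \<xi>" "\<xi> < s0 + r"
      and e1: "\<Delta> r = r * (?f1 (P \<xi> (t0 + r)) - ?f1 (P \<xi> t0))"
      unfolding \<Delta>_def by (auto simp: algebra_simps)
    have "\<exists>\<eta>. t0 < \<eta> \<and> \<eta> < t0 + r \<and> ?f1 (P \<xi> (t0 + r)) - ?f1 (P \<xi> t0) = (t0 + r - t0) * ?f12 (P \<xi> \<eta>)"
      using r by (intro MVT2) (auto intro!: dc' smf1)
    then obtain \<eta> where "t0 < \<eta>" "\<eta> < t0 + r" "?f1 (P \<xi> (t0 + r)) - ?f1 (P \<xi> t0) = r * ?f12 (P \<xi> \<eta>)"
      by auto
    then show ?thesis using \<xi> e1 by auto
  qed
  have B: "\<exists>\<xi> \<eta>. s0 < \<xi> \<and> \<xi> < s0 + r \<and> t0 < \<eta> \<and> \<eta> < t0 + r \<and> \<Delta> r = r * (r * ?f21 (P \<xi> \<eta>))"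
    if r: "r > 0" for r
  proof -
    have "\<exists>\<eta>. t0 < \<eta> \<and> \<eta> < t0 + r \<and>
        (f (P (s0 + r) (t0 + r)) - f (P s0 (t0 + r))) - (f (P (s0 + r) t0) - f (P s0 t0))
        = (t0 + r - t0) * (?f2 (P (s0 + r) \<eta>) - ?f2 (P s0 \<eta>))"
      using r by (intro MVT2) (auto intro!: derivative_intros dc' sm)
    then obtain \<eta> where \<eta>: "t0 < \<eta>" "\<eta> < t0 + r"
      and e1: "\<Delta> r = r * (?f2 (P (s0 + r) \<eta>) - ?f2 (P s0 \<eta>))"
      unfolding \<Delta>_def by (auto simp: algebra_simps)
    have "\<exists>\<xi>. s0 < \<xi> \<and> \<xi> < s0 + r \<and> ?f2 (P (s0 + r) \<eta>) - ?f2 (P s0 \<eta>) = (s0 + r - s0) * ?f21 (P \<xi> \<eta>)"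
      using r by (intro MVT2) (auto intro!: dc smf1)
    then obtain \<xi> where "s0 < \<xi>" "\<xi> < s0 + r" "?f2 (P (s0 + r) \<eta>) - ?f2 (P s0 \<eta>) = r * ?f21 (P \<xi> \<eta>)"
      by auto
    then show ?thesis using \<eta> e1 by auto
  qed
  assume ne: "?f12 p0 \<noteq> ?f21 p0"
  define e where "e = \<bar>?f12 p0 - ?f21 p0\<bar> / 2"
  have e: "e > 0" using ne by (simp add: e_def)
  have c12: "continuous_on UNIV ?f12" "continuous_on UNIV ?f21"
    using sm by (auto intro!: sm_cont sm_pd)
  obtain d1 where d1: "d1 > 0" and h1: "\<And>s t. \<bar>s - s0\<bar> < d1 \<Longrightarrow> \<bar>t - t0\<bar> < d1 \<Longrightarrow> \<bar>?f12 (P s t) - ?f12 p0\<bar> < e"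
    using cont_2d[OF c12(1) e, of p0 c c'] unfolding P_def s0_def t0_def by auto
  obtain d2 where d2: "d2 > 0" and h2: "\<And>s t. \<bar>s - s0\<bar> < d2 \<Longrightarrow> \<bar>t - t0\<bar> < d2 \<Longrightarrow> \<bar>?f21 (P s t) - ?f21 p0\<bar> < e"
    using cont_2d[OF c12(2) e, of p0 c c'] unfolding P_def s0_def t0_def by auto
  define r where "r = min d1 d2 / 2"
  have r: "r > 0" "r < d1" "r < d2" using d1 d2 by (auto simp: r_def)
  obtain \<xi> \<eta> where x: "s0 < \<xi>" "\<xi> < s0 + r" "t0 < \<eta>" "\<eta> < t0 + r" and eA: "\<Delta> r = r * (r * ?f12 (P \<xi> \<eta>))"
    using A[OF r(1)] by blast
  obtain \<xi>' \<eta>' where x': "s0 < \<xi>'" "\<xi>' < s0 + r" "t0 < \<eta>'" "\<eta>' < t0 + r" and eB: "\<Delta> r = r * (r * ?f21 (P \<xi>' \<eta>'))"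
    using B[OF r(1)] by blast
  have eq: "?f12 (P \<xi> \<eta>) = ?f21 (P \<xi>' \<eta>')" using eA eB r(1) by simp
  have "\<bar>?f12 (P \<xi> \<eta>) - ?f12 p0\<bar> < e" using x r by (intro h1) auto
  moreover have "\<bar>?f21 (P \<xi>' \<eta>') - ?f21 p0\<bar> < e" using x' r by (intro h2) auto
  ultimately show False using eq abs_contra unfolding e_def by blast
qed

lemma clairaut:
  fixes f :: "jet \<Rightarrow> 'v::euclidean_space"
  assumes sm: "smooth_jet f"
  shows "pd c' (pd c f) = pd c (pd c' f)"
proof (cases "c = c'")
  case True then show ?thesis by simp
next
  case False
  show ?thesis
  proof (intro ext euclidean_eqI[where 'a='v])
    fix p and b :: 'v assume b: "b \<in> Basis"
    have L: "bounded_linear (\<lambda>x::'v. x \<bullet> b)" by (rule bounded_linear_inner_left)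
    have s1: "smooth_jet (pd c f)" "smooth_jet (pd c' f)" using sm sm_pd by blast+
    have "pd c' (pd c f) p \<bullet> b = pd c' (pd c (\<lambda>q. f q \<bullet> b)) p"
      using pd_lin[OF L sm_dl[OF sm], of c] pd_lin[OF L sm_dl[OF s1(1)], of c'] by simp
    also have "\<dots> = pd c (pd c' (\<lambda>q. f q \<bullet> b)) p"
      by (rule clairaut_real[OF sm_lin[OF L sm] False])
    also have "\<dots> = pd c (pd c' f) p \<bullet> b"
      using pd_lin[OF L sm_dl[OF sm], of c'] pd_lin[OF L sm_dl[OF s1(2)], of c] by simp
    finally show "pd c' (pd c f) p \<bullet> b = pd c (pd c' f) p \<bullet> b" .
  qed
qed


lemma eventually_neq_at: "eventually (\<lambda>y. y \<noteq> x) (at (x::real))"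
  by (simp add: eventually_at_filter)

lemma sgn_quot:
  fixes v D :: "'a::real_normed_vector"
  assumes d: "(d::real) \<noteq> 0"
  shows "(v - d *\<^sub>R D) /\<^sub>R \<bar>d\<bar> = sgn d *\<^sub>R (v /\<^sub>R d - D)"
proof -
  have sg: "sgn d = d / \<bar>d\<bar>" by (simp add: real_sgn_eq)
  have "sgn d *\<^sub>R (v /\<^sub>R d - D) = (sgn d / d) *\<^sub>R v - sgn d *\<^sub>R D"
    by (simp add: scaleR_right_diff_distrib divide_inverse)
  also have "sgn d / d = 1 / \<bar>d\<bar>" using d by (simp add: sg)
  also have "(1 / \<bar>d\<bar>) *\<^sub>R v - sgn d *\<^sub>R D = (v - d *\<^sub>R D) /\<^sub>R \<bar>d\<bar>"
    by (simp add: sg scaleR_right_diff_distrib divide_inverse mult.commute)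
  finally show ?thesis by simp
qed

lemma hvd_quot_iff:
  fixes f :: "real \<Rightarrow> 'a::real_normed_vector"
  shows "(f has_vector_derivative D) (at x) \<longleftrightarrow> ((\<lambda>y. (f y - f x) /\<^sub>R (y - x)) \<longlongrightarrow> D) (at x)"
proof -
  have bl: "bounded_linear (\<lambda>h::real. h *\<^sub>R D)" by (rule bounded_linear_scaleR_left)
  have eq: "norm (((f y - f x) - (y - x) *\<^sub>R D) /\<^sub>R norm (y - x)) = norm ((f y - f x) /\<^sub>R (y - x) - D)"
    if "y \<noteq> x" for y
  proof -
    have "((f y - f x) - (y - x) *\<^sub>R D) /\<^sub>R norm (y - x) = sgn (y - x) *\<^sub>R ((f y - f x) /\<^sub>R (y - x) - D)"
      using sgn_quot[of "y - x" "f y - f x" D] that by simp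
    then show ?thesis using that by (simp add: abs_sgn)
  qed
  have "(f has_vector_derivative D) (at x) \<longleftrightarrow>
      ((\<lambda>y. ((f y - f x) - (y - x) *\<^sub>R D) /\<^sub>R norm (y - x)) \<longlongrightarrow> 0) (at x)"
    unfolding has_vector_derivative_def has_derivative_at_within using bl by simp
  also have "\<dots> \<longleftrightarrow> ((\<lambda>y. norm (((f y - f x) - (y - x) *\<^sub>R D) /\<^sub>R norm (y - x))) \<longlongrightarrow> 0) (at x)"
    by (rule tendsto_norm_zero_iff[symmetric])
  also have "\<dots> \<longleftrightarrow> ((\<lambda>y. norm ((f y - f x) /\<^sub>R (y - x) - D)) \<longlongrightarrow> 0) (at x)"
    by (rule tendsto_cong, rule eventually_mono[OF eventually_neq_at[of x]]) (use eq in simp)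
  also have "\<dots> \<longleftrightarrow> ((\<lambda>y. (f y - f x) /\<^sub>R (y - x)) \<longlongrightarrow> D) (at x)"
    by (simp add: tendsto_norm_zero_iff LIM_zero_iff)
  finally show ?thesis .
qed

lemma inv_cont:
  fixes b ib :: "real \<Rightarrow> 'a::real_normed_algebra_1"
  assumes l: "\<And>s. ib s * b s = 1" and r: "\<And>s. b s * ib s = 1"
    and bc: "(b \<longlongrightarrow> b x) (at x)"
  shows "(ib \<longlongrightarrow> ib x) (at x)"
proof -
  let ?a = "b x" and ?ia = "ib x"
  have id: "ib s - ?ia = ib s * (?a - b s) * ?ia" for s
  proof -
    have "ib s * (?a - b s) * ?ia = ib s * (?a * ?ia) - (ib s * b s) * ?ia"
      by (simp add: algebra_simps)
    then show ?thesis using l r by simp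
  qed
  define \<delta> where "\<delta> = 1 / (2 * (norm ?ia + 1))"
  have \<delta>: "\<delta> > 0" 
  proof -
    have "0 < norm ?ia + 1" by (simp add: add_nonneg_pos)
    then show ?thesis unfolding \<delta>_def by simp
  qed
  have "((\<lambda>s. b s - ?a) \<longlongrightarrow> 0) (at x)" using bc by (simp add: LIM_zero_iff)
  then have nb: "((\<lambda>s. norm (b s - ?a)) \<longlongrightarrow> 0) (at x)" by (rule tendsto_norm_zero)
  have ev: "eventually (\<lambda>s. norm (b s - ?a) < \<delta>) (at x)"
    using order_tendstoD(2)[OF nb \<delta>] by simp
  have bound: "norm (ib s - ?ia) \<le> 2 * norm ?ia ^ 2 * norm (b s - ?a)" if s: "norm (b s - ?a) < \<delta>" for s
  proof -
    have nd: "norm (?a - b s) = norm (b s - ?a)" by (rule norm_minus_commute)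
    have k: "norm (?a - b s) * norm ?ia \<le> 1 / 2"
    proof -
      have "norm (?a - b s) * norm ?ia \<le> \<delta> * norm ?ia"
        using s nd by (intro mult_right_mono) simp_all
      also have "\<dots> \<le> 1 / 2"
      proof -
        have p: "0 < norm ?ia + 1" by (simp add: add_nonneg_pos)
        then show ?thesis unfolding \<delta>_def by (simp add: field_simps)
      qed
      finally show ?thesis .
    qed
    have "norm (ib s * (?a - b s) * ?ia) \<le> norm (ib s * (?a - b s)) * norm ?ia"
      by (rule norm_mult_ineq)
    also have "\<dots> \<le> (norm (ib s) * norm (?a - b s)) * norm ?ia"
      by (rule mult_right_mono[OF norm_mult_ineq norm_ge_zero])
    finally have n1: "norm (ib s * (?a - b s) * ?ia) \<le> norm (ib s) * (norm (?a - b s) * norm ?ia)"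
      by (simp add: mult.assoc)
    have "norm (ib s) = norm (?ia + (ib s - ?ia))" by simp
    also have "\<dots> \<le> norm ?ia + norm (ib s * (?a - b s) * ?ia)" unfolding id by (rule norm_triangle_ineq)
    also have "\<dots> \<le> norm ?ia + norm (ib s) * (1 / 2)"
    proof -
      have "norm (ib s) * (norm (?a - b s) * norm ?ia) \<le> norm (ib s) * (1 / 2)"
        by (rule mult_left_mono[OF k norm_ge_zero])
      then show ?thesis using n1 by simp
    qed
    finally have ib2: "norm (ib s) \<le> 2 * norm ?ia" by simp
    have "norm (ib s - ?ia) \<le> norm (ib s) * (norm (?a - b s) * norm ?ia)" unfolding id by (rule n1)
    also have "\<dots> \<le> (2 * norm ?ia) * (norm (?a - b s) * norm ?ia)"
      using ib2 by (intro mult_right_mono) simp_all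
    also have "\<dots> = 2 * norm ?ia ^ 2 * norm (b s - ?a)" by (simp add: nd power2_eq_square)
    finally show ?thesis .
  qed
  have "((\<lambda>s. ib s - ?ia) \<longlongrightarrow> 0) (at x)"
  proof (rule Lim_null_comparison)
    show "eventually (\<lambda>s. norm (ib s - ?ia) \<le> 2 * norm ?ia ^ 2 * norm (b s - ?a)) (at x)"
      using ev bound by (auto elim: eventually_mono)
    show "((\<lambda>s. 2 * norm ?ia ^ 2 * norm (b s - ?a)) \<longlongrightarrow> 0) (at x)"
      using tendsto_mult_right_zero[OF nb] by simp
  qed
  then show ?thesis by (simp add: LIM_zero_iff)
qed

lemma inv_hvd:
  fixes b ib :: "real \<Rightarrow> 'a::real_normed_algebra_1"
  assumes l: "\<And>s. ib s * b s = 1" and r: "\<And>s. b s * ib s = 1"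
    and bd: "(b has_vector_derivative D) (at x)"
  shows "(ib has_vector_derivative - (ib x * D * ib x)) (at x)"
proof -
  have "continuous (at x) b" using bd by (meson differentiableI_vector differentiable_imp_continuous_within)
  then have bc: "(b \<longlongrightarrow> b x) (at x)" by (simp add: continuous_at)
  have ic: "(ib \<longlongrightarrow> ib x) (at x)" by (rule inv_cont[OF l r bc])
  have q: "((\<lambda>y. (b y - b x) /\<^sub>R (y - x)) \<longlongrightarrow> D) (at x)" using bd hvd_quot_iff by blast
  have id: "(ib y - ib x) /\<^sub>R (y - x) = - (ib y * ((b y - b x) /\<^sub>R (y - x)) * ib x)" for y
  proof -
    have "ib y - ib x = ib y * (b x * ib x) - (ib y * b y) * ib x" using l r by simp
    also have "\<dots> = - (ib y * (b y - b x) * ib x)" by (simp add: algebra_simps)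
    finally have e: "ib y - ib x = - (ib y * (b y - b x) * ib x)" .
    show ?thesis by (simp only: e scaleR_minus_right mult_scaleR_right mult_scaleR_left)
  qed
  have "((\<lambda>y. - (ib y * ((b y - b x) /\<^sub>R (y - x)) * ib x)) \<longlongrightarrow> - (ib x * D * ib x)) (at x)"
    by (intro tendsto_minus tendsto_mult ic q tendsto_const)
  then show ?thesis unfolding hvd_quot_iff id .
qed


lemma mm_Rep: "Rep_M (Abs_M A * Abs_M B) = (A ** B :: 'k::finite cmat)"
  by (simp add: Rep_M_mult Abs_M_inverse)

lemma bb_mm: "bounded_bilinear (\<lambda>(A::'k::finite cmat) (B::'k cmat). A ** B)"
proof
  fix a a' b b' :: "'k cmat" and r :: real
  show "(a + a') ** b = a ** b + a' ** b" by (rule matrix_add_rdistrib')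
  show "a ** (b + b') = a ** b + a ** b'" by (rule matrix_add_ldistrib)
  show "(r *\<^sub>R a) ** b = r *\<^sub>R (a ** b)" by (simp add: scalar_matrix_assoc)
  show "a ** (r *\<^sub>R b) = r *\<^sub>R (a ** b)" by (simp add: matrix_scalar_ac scalar_matrix_assoc)
next
  obtain K where K: "\<And>A::'k cmat. norm (Abs_M A) \<le> norm A * K" and K0: "K \<ge> 0"
    using bounded_linear.nonneg_bounded[OF bl_Abs_M] by blast
  define C where "C = (of_nat (CARD('k) * CARD('k)) :: real)"
  have C0: "C \<ge> 0" by (simp add: C_def)
  show "\<exists>K. \<forall>(a::'k cmat) (b::'k cmat). norm (a ** b) \<le> norm a * norm b * K"
  proof (intro exI[where x="C * K * K"] allI)
    fix a :: "'k cmat" and b :: "'k cmat"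
    have "norm (a ** b) = norm (Rep_M (Abs_M a * Abs_M b))" by (simp add: mm_Rep)
    also have "\<dots> \<le> C * norm (Abs_M a * Abs_M b)" unfolding C_def by (rule Rep_M_bound)
    also have "\<dots> \<le> C * (norm (Abs_M a) * norm (Abs_M b))"
      by (intro mult_left_mono norm_mult_ineq C0)
    also have "\<dots> \<le> C * ((norm a * K) * (norm b * K))"
      using K0 by (intro mult_left_mono mult_mono K C0) simp_all
    also have "\<dots> = norm a * norm b * (C * K * K)" by (simp add: algebra_simps)
    finally show "norm (a ** b) \<le> norm a * norm b * (C * K * K)" .
  qed
qed

lemma bb_brk: "bounded_bilinear (brk :: 'k::finite cmat \<Rightarrow> _)"
proof -
  interpret mm: bounded_bilinear "\<lambda>(A::'k::finite cmat) (B::'k cmat). A ** B" by (rule bb_mm)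
  show ?thesis
  proof
    fix a a' b b' :: "'k cmat" and r :: real
    show "brk (a + a') b = brk a b + brk a' b" by (simp add: brk_def mm.add_left mm.add_right)
    show "brk a (b + b') = brk a b + brk a b'" by (simp add: brk_def mm.add_left mm.add_right)
    show "brk (r *\<^sub>R a) b = r *\<^sub>R brk a b" by (simp add: brk_def mm.scaleR_left mm.scaleR_right scaleR_diff_right)
    show "brk a (r *\<^sub>R b) = r *\<^sub>R brk a b" by (simp add: brk_def mm.scaleR_left mm.scaleR_right scaleR_diff_right)
  next
    obtain K where K: "\<And>(a::'k cmat) (b::'k cmat). norm (a ** b) \<le> norm a * norm b * K"
      using bounded_bilinear.bounded[OF bb_mm] by auto
    show "\<exists>K. \<forall>a b :: 'k cmat. norm (brk a b) \<le> norm a * norm b * K"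
    proof (intro exI allI)
      fix a b :: "'k cmat"
      have "norm (brk a b) \<le> norm (a ** b) + norm (b ** a)" unfolding brk_def by (rule norm_triangle_ineq4)
      also have "\<dots> \<le> norm a * norm b * K + norm b * norm a * K" by (intro add_mono K)
      also have "\<dots> = norm a * norm b * (2 * K)" by (simp add: algebra_simps)
      finally show "norm (brk a b) \<le> norm a * norm b * (2 * K)" .
    qed
  qed
qed

lemma mi_lr:
  fixes A :: "'k::finite cmat"
  assumes "invertible A"
  shows "matrix_inv A ** A = mat 1" "A ** matrix_inv A = mat 1"
proof -
  have "\<exists>A'. A ** A' = mat 1 \<and> A' ** A = mat 1" using assms unfolding invertible_def by blast
  from someI_ex[OF this] show "matrix_inv A ** A = mat 1" "A ** matrix_inv A = mat 1"
    unfolding matrix_inv_def by blast+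
qed

lemma inv_hvd_cmat:
  fixes \<gamma> :: "real \<Rightarrow> 'k::finite cmat"
  assumes inv: "\<And>s. invertible (\<gamma> s)" and gd: "(\<gamma> has_vector_derivative D) (at x)"
  shows "((\<lambda>s. matrix_inv (\<gamma> s)) has_vector_derivative
           - (matrix_inv (\<gamma> x) ** D ** matrix_inv (\<gamma> x))) (at x)"
proof -
  define b where "b s = Abs_M (\<gamma> s)" for s
  define ib where "ib s = Abs_M (matrix_inv (\<gamma> s))" for s
  have Am: "Abs_M (A ** B) = Abs_M A * Abs_M B" for A B :: "'k cmat"
    by (metis Abs_M_inverse Rep_M_inverse UNIV_I mm_Rep)
  have l: "ib s * b s = 1" for s unfolding ib_def b_def by (simp add: Am[symmetric] mi_lr[OF inv] Abs_M_one)
  have r: "b s * ib s = 1" for s unfolding ib_def b_def by (simp add: Am[symmetric] mi_lr[OF inv] Abs_M_one)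
  have bd: "(b has_vector_derivative Abs_M D) (at x)"
    unfolding b_def by (rule bounded_linear.has_vector_derivative[OF bl_Abs_M gd])
  from bounded_linear.has_vector_derivative[OF bl_Rep_M inv_hvd[OF l r bd]]
  show ?thesis
    by (simp add: ib_def Abs_M_inverse Rep_M_mult uminus_M.rep_eq)
qed

lemma pd_inv:
  fixes \<Phi> :: "jet \<Rightarrow> 'k::finite cmat"
  assumes d: "dl \<Phi>" and inv: "\<And>p. invertible (\<Phi> p)"
  shows "pd c (\<lambda>q. matrix_inv (\<Phi> q)) = (\<lambda>q. - (matrix_inv (\<Phi> q) ** pd c \<Phi> q ** matrix_inv (\<Phi> q)))"
proof (rule pd_eqI)
  fix p
  show "((\<lambda>t. matrix_inv (\<Phi> (p(c := t)))) has_vector_derivative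
      - (matrix_inv (\<Phi> p) ** pd c \<Phi> p ** matrix_inv (\<Phi> p))) (at (p c))"
    using inv_hvd_cmat[OF inv hvd[OF d, of p c]] by simp
qed

lemma dl_inv:
  fixes \<Phi> :: "jet \<Rightarrow> 'k::finite cmat"
  assumes d: "dl \<Phi>" and inv: "\<And>p. invertible (\<Phi> p)"
  shows "dl (\<lambda>q. matrix_inv (\<Phi> q))"
  by (rule dl_I) (rule inv_hvd_cmat[OF inv hvd[OF d]])


definition Lop :: "(jc \<Rightarrow> jet \<Rightarrow> real) \<Rightarrow> jc set \<Rightarrow> (jet \<Rightarrow> 'v::real_normed_vector) \<Rightarrow> jet \<Rightarrow> 'v" where
  "Lop w C f p = (\<Sum>c\<in>C. w c p *\<^sub>R pd c f p)"

lemma Lop_const: "Lop w C (\<lambda>q. k) p = 0"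
  by (simp add: Lop_def pd_const)

lemma Lop_coord: "finite C \<Longrightarrow> Lop w C (\<lambda>q. q K) p = (if K \<in> C then w K p else 0)"
proof -
  assume C: "finite C"
  have "Lop w C (\<lambda>q. q K) p = (\<Sum>c\<in>C. if c = K then w K p else 0)"
    unfolding Lop_def pd_coord by (intro sum.cong) auto
  also have "\<dots> = (if K \<in> C then w K p else 0)" using C by (simp add: sum.delta')
  finally show ?thesis .
qed

lemma Lop_bil:
  assumes P: "bounded_bilinear P" and f: "dl f" and g: "dl g"
  shows "Lop w C (\<lambda>q. P (f q) (g q)) p = P (f p) (Lop w C g p) + P (Lop w C f p) (g p)"
proof -
  interpret P: bounded_bilinear P by (rule P)
  show ?thesis
    unfolding Lop_def pd_bil[OF P f g]
    by (simp add: P.sum_right P.sum_left P.scaleR_right P.scaleR_left scaleR_right_distrib sum.distrib)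
qed

lemma Lop_lin:
  assumes L: "bounded_linear L" and f: "dl f"
  shows "Lop w C (\<lambda>q. L (f q)) p = L (Lop w C f p)"
proof -
  interpret L: bounded_linear L by (rule L)
  show ?thesis unfolding Lop_def pd_lin[OF L f] by (simp add: L.sum L.scaleR)
qed

lemma Lop_add:
  assumes f: "dl f" and g: "dl g"
  shows "Lop w C (\<lambda>q. f q + g q) p = Lop w C f p + Lop w C g p"
  unfolding Lop_def pd_add[OF f g] by (simp add: scaleR_right_distrib sum.distrib)

lemma Lop_diff:
  assumes f: "dl f" and g: "dl g"
  shows "Lop w C (\<lambda>q. f q - g q) p = Lop w C f p - Lop w C g p"
  unfolding Lop_def pd_diff[OF f g] by (simp add: scaleR_right_diff_distrib sum_subtractf)

lemma Lop_sum:
  assumes "finite I" "\<And>i. i \<in> I \<Longrightarrow> dl (f i)"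
  shows "Lop w C (\<lambda>q. \<Sum>i\<in>I. f i q) p = (\<Sum>i\<in>I. Lop w C (f i) p)"
  unfolding Lop_def by (simp add: pd_sum[OF assms] scaleR_sum_right sum.swap[of _ C])

lemma Lop_mono:
  assumes "finite C'" "C \<subseteq> C'" "\<And>c. c \<in> C' - C \<Longrightarrow> pd c f p = 0"
  shows "Lop w C f p = Lop w C' f p"
  unfolding Lop_def by (rule sum.mono_neutral_left) (use assms in auto)

lemma Lop_Lop:
  assumes C: "finite C" and D: "finite D" and v: "\<And>d. d \<in> D \<Longrightarrow> dl (v d)"
    and f: "dl f" "\<And>d. dl (pd d f)"
  shows "Lop w C (Lop v D f) p =
     (\<Sum>c\<in>C. \<Sum>d\<in>D. (w c p * v d p) *\<^sub>R pd c (pd d f) p) + (\<Sum>d\<in>D. Lop w C (v d) p *\<^sub>R pd d f p)"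
proof -
  have sb: "bounded_bilinear (\<lambda>(a::real) (x::'a). a *\<^sub>R x)" by (rule bounded_bilinear_scaleR)
  have dlt: "dl (\<lambda>q. v d q *\<^sub>R pd d f q)" if "d \<in> D" for d
    by (rule dl_bil[OF sb v[OF that] f(2)])
  have e: "Lop v D f = (\<lambda>q. \<Sum>d\<in>D. v d q *\<^sub>R pd d f q)"
    by (simp add: Lop_def[abs_def])
  have "Lop w C (Lop v D f) p = (\<Sum>d\<in>D. Lop w C (\<lambda>q. v d q *\<^sub>R pd d f q) p)"
    unfolding e by (rule Lop_sum[OF D dlt])
  also have "\<dots> = (\<Sum>d\<in>D. v d p *\<^sub>R Lop w C (pd d f) p + Lop w C (v d) p *\<^sub>R pd d f p)"
    by (intro sum.cong refl Lop_bil[OF sb v f(2)])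
  also have "\<dots> = (\<Sum>c\<in>C. \<Sum>d\<in>D. (w c p * v d p) *\<^sub>R pd c (pd d f) p) + (\<Sum>d\<in>D. Lop w C (v d) p *\<^sub>R pd d f p)"
    by (simp add: sum.distrib Lop_def scaleR_sum_right sum.swap[of _ C] mult.commute)
  finally show ?thesis .
qed

lemma Lop_comm:
  fixes f :: "jet \<Rightarrow> 'v::euclidean_space"
  assumes C: "finite C" and D: "finite D" and w: "\<And>c. c \<in> C \<Longrightarrow> dl (w c)"
    and v: "\<And>d. d \<in> D \<Longrightarrow> dl (v d)" and f: "smooth_jet f"
  shows "Lop w C (Lop v D f) p - Lop v D (Lop w C f) p =
     (\<Sum>d\<in>D. Lop w C (v d) p *\<^sub>R pd d f p) - (\<Sum>c\<in>C. Lop v D (w c) p *\<^sub>R pd c f p)"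
proof -
  have f2: "dl f" "\<And>d. dl (pd d f)" using f by (auto intro: sm_dl sm_pd)
  have sw: "(\<Sum>c\<in>C. \<Sum>d\<in>D. (w c p * v d p) *\<^sub>R pd c (pd d f) p) = (\<Sum>d\<in>D. \<Sum>c\<in>C. (v d p * w c p) *\<^sub>R pd d (pd c f) p)"
    by (subst sum.swap) (simp add: clairaut[OF f] mult.commute)
  have e1: "Lop w C (Lop v D f) p = (\<Sum>c\<in>C. \<Sum>d\<in>D. (w c p * v d p) *\<^sub>R pd c (pd d f) p) + (\<Sum>d\<in>D. Lop w C (v d) p *\<^sub>R pd d f p)"
    by (rule Lop_Lop[OF C D v f2])
  have e2: "Lop v D (Lop w C f) p = (\<Sum>d\<in>D. \<Sum>c\<in>C. (v d p * w c p) *\<^sub>R pd d (pd c f) p) + (\<Sum>c\<in>C. Lop v D (w c) p *\<^sub>R pd c f p)"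
    by (rule Lop_Lop[OF D C w f2])
  show ?thesis unfolding e1 e2 sw by simp
qed


definition CP :: "nat \<Rightarrow> nat \<Rightarrow> jc set" where
  "CP m N = (\<lambda>(n, a, b). Th n a b) ` thcoords m N"

definition CT :: "nat \<Rightarrow> nat \<Rightarrow> nat \<Rightarrow> jc set" where
  "CT m \<alpha> N = insert (xc \<alpha>) (CP m N)"

definition tdw :: "nat \<Rightarrow> jc \<Rightarrow> jet \<Rightarrow> real" where
  "tdw \<alpha> c = (case c of Th n a b \<Rightarrow> (\<lambda>p. p (shift \<alpha> (n, a, b))) | _ \<Rightarrow> (\<lambda>p. 1))"

definition pww :: "nat \<Rightarrow> (nat \<Rightarrow> jet \<Rightarrow> real) \<Rightarrow> jc \<Rightarrow> jet \<Rightarrow> real" where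
  "pww m Q c = (case c of Th n a b \<Rightarrow> TDJ m a b (Q n) | _ \<Rightarrow> (\<lambda>p. 0))"

lemma finite_CP: "finite (CP m N)" by (simp add: CP_def finite_thcoords)
lemma finite_CT: "finite (CT m \<alpha> N)" by (simp add: CT_def finite_CP)

lemma xc_cases: "xc \<alpha> = X1 \<or> xc \<alpha> = X2"
  by (cases \<alpha> rule: xc.cases) auto

lemma xc_notin: "xc \<alpha> \<notin> CP m N"
  using xc_cases[of \<alpha>] by (auto simp: CP_def)

lemma inj_Th: "inj_on (\<lambda>(n, a, b). Th n a b) A"
  by (auto simp: inj_on_def)

lemma Th_in_CP: "Th n a b \<in> CP m N \<longleftrightarrow> (n, a, b) \<in> thcoords m N"
proof
  assume "Th n a b \<in> CP m N" then show "(n, a, b) \<in> thcoords m N" by (auto simp: CP_def)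
next
  assume "(n, a, b) \<in> thcoords m N"
  then show "Th n a b \<in> CP m N" unfolding CP_def by (rule rev_image_eqI) simp
qed

lemma Th_in_CT: "Th n a b \<in> CT m \<alpha> N \<longleftrightarrow> (n, a, b) \<in> thcoords m N"
  using xc_cases[of \<alpha>] by (auto simp: CT_def Th_in_CP)

lemma tdw_xc: "tdw \<alpha> (xc \<alpha>) = (\<lambda>p. 1)"
  using xc_cases[of \<alpha>] by (auto simp: tdw_def)

lemma TD_Lop:
  assumes "depends_only m N f"
  shows "TD m \<alpha> f p = Lop (tdw \<alpha>) (CT m \<alpha> N) f p"
proof -
  have "Lop (tdw \<alpha>) (CT m \<alpha> N) f p = pd (xc \<alpha>) f p + (\<Sum>c\<in>CP m N. tdw \<alpha> c p *\<^sub>R pd c f p)"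
    unfolding Lop_def CT_def by (simp add: sum.insert finite_CP xc_notin tdw_xc)
  also have "(\<Sum>c\<in>CP m N. tdw \<alpha> c p *\<^sub>R pd c f p) =
      (\<Sum>(n, a, b) \<in> thcoords m N. p (shift \<alpha> (n, a, b)) *\<^sub>R pd (Th n a b) f p)"
    unfolding CP_def by (subst sum.reindex[OF inj_Th]) (simp add: case_prod_beta tdw_def)
  finally show ?thesis using TD_N[OF assms] by simp
qed

lemma prw_Lop:
  assumes "depends_only m N f"
  shows "prw m Q f p = Lop (pww m Q) (CP m N) f p"
proof -
  have "Lop (pww m Q) (CP m N) f p =
      (\<Sum>(n, a, b) \<in> thcoords m N. TDJ m a b (Q n) p *\<^sub>R pd (Th n a b) f p)"
    unfolding CP_def Lop_def by (subst sum.reindex[OF inj_Th]) (simp add: case_prod_beta pww_def)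
  then show ?thesis using prw_N[OF assms] by simp
qed

lemma TD_fun: "depends_only m N f \<Longrightarrow> TD m \<alpha> f = Lop (tdw \<alpha>) (CT m \<alpha> N) f"
  using TD_Lop by blast

lemma prw_fun: "depends_only m N f \<Longrightarrow> prw m Q f = Lop (pww m Q) (CP m N) f"
  using prw_Lop by blast

lemma sm_tdw: "smooth_jet (tdw \<alpha> c)"
  by (cases c) (simp_all add: tdw_def sm_coord sm_const)

lemma dep_tdw: "c \<in> CP m N \<Longrightarrow> depends_only m (Suc N) (tdw \<alpha> c)"
  by (cases \<alpha> rule: xc.cases; auto simp: CP_def thcoords_def tdw_def intro!: dep_coord)

lemma dep_Lop:
  assumes "finite C" "\<And>c. c \<in> C \<Longrightarrow> depends_only m N (w c)" "depends_only m N f"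
  shows "depends_only m N (Lop w C f)"
proof -
  have "Lop w C f = (\<lambda>p. \<Sum>c\<in>C. w c p *\<^sub>R pd c f p)" by (simp add: Lop_def[abs_def])
  moreover have "depends_only m N (\<lambda>p. \<Sum>c\<in>C. w c p *\<^sub>R pd c f p)"
    using assms by (intro dep_sum dep_comb[where h=scaleR] dep_pd) auto
  ultimately show ?thesis by simp
qed

lemma sm_Lop:
  assumes "finite C" "\<And>c. c \<in> C \<Longrightarrow> smooth_jet (w c)" "smooth_jet f"
  shows "smooth_jet (Lop w C f)"
proof -
  have "Lop w C f = (\<lambda>p. \<Sum>c\<in>C. w c p *\<^sub>R pd c f p)" by (simp add: Lop_def[abs_def])
  moreover have "smooth_jet (\<lambda>p. \<Sum>c\<in>C. w c p *\<^sub>R pd c f p)"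
    using assms by (intro sm_sum sm_bil[OF bounded_bilinear_scaleR] sm_pd) auto
  ultimately show ?thesis by simp
qed

lemma df_TD:
  assumes "diff_fun m f"
  shows "diff_fun m (TD m \<alpha> f)"
proof -
  obtain N where N: "depends_only m N f" and s: "smooth_jet f" using assms by (auto simp: diff_fun_def)
  have "smooth_jet (TD m \<alpha> f)" unfolding TD_fun[OF N] by (rule sm_Lop[OF finite_CT sm_tdw s])
  then show ?thesis using dep_TD[OF N] by (auto simp: diff_fun_def)
qed

lemma dep_TDJ: "depends_only m N g \<Longrightarrow> depends_only m (N + b + a) (TDJ m a b g)"
proof -
  assume g: "depends_only m N g"
  have 2: "depends_only m (N + b) ((TD m 2 ^^ b) g)"
    by (induction b) (simp_all add: g dep_TD)
  show ?thesis unfolding TDJ_def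
    by (induction a) (simp_all add: 2 dep_TD)
qed

lemma df_TDJ: "diff_fun m g \<Longrightarrow> diff_fun m (TDJ m a b g)"
proof -
  assume g: "diff_fun m g"
  have 2: "diff_fun m ((TD m 2 ^^ b) g)" by (induction b) (simp_all add: g df_TD)
  show ?thesis unfolding TDJ_def by (induction a) (simp_all add: 2 df_TD)
qed

definition Qok :: "nat \<Rightarrow> (nat \<Rightarrow> jet \<Rightarrow> real) \<Rightarrow> bool" where
  "Qok m Q \<longleftrightarrow> (\<forall>n\<in>{1..m}. diff_fun m (Q n))"

lemma Qok_bound:
  assumes "Qok m Q" obtains NQ where "\<And>n. n \<in> {1..m} \<Longrightarrow> depends_only m NQ (Q n)"
proof -
  have "\<forall>n\<in>{1..m}. \<exists>N. depends_only m N (Q n)" using assms by (auto simp: Qok_def diff_fun_def)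
  then obtain Nf where Nf: "\<And>n. n \<in> {1..m} \<Longrightarrow> depends_only m (Nf n) (Q n)" by metis
  have "depends_only m (\<Sum>k\<in>{1..m}. Nf k) (Q n)" if "n \<in> {1..m}" for n
    by (rule dep_mono[OF Nf[OF that]]) (rule member_le_sum[OF that], simp_all)
  then show ?thesis using that by blast
qed

lemma CP_cases: "c \<in> CP m N \<Longrightarrow> (\<And>n a b. c = Th n a b \<Longrightarrow> n \<in> {1..m} \<Longrightarrow> a + b \<le> N \<Longrightarrow> P) \<Longrightarrow> P"
  by (auto simp: CP_def thcoords_def)

lemma sm_pww: "Qok m Q \<Longrightarrow> c \<in> CP m N \<Longrightarrow> smooth_jet (pww m Q c)"
proof -
  assume Q: "Qok m Q" and c: "c \<in> CP m N"
  show ?thesis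
  proof (rule CP_cases[OF c])
    fix n a b assume e: "c = Th n a b" and n: "n \<in> {1..m}"
    have "diff_fun m (TDJ m a b (Q n))" using Q n by (auto simp: Qok_def intro: df_TDJ)
    then show ?thesis using e by (simp add: pww_def diff_fun_def)
  qed
qed

lemma dep_pww:
  assumes "\<And>n. n \<in> {1..m} \<Longrightarrow> depends_only m NQ (Q n)" "c \<in> CP m N"
  shows "depends_only m (NQ + N) (pww m Q c)"
  using assms(2)
proof (clarsimp simp: CP_def thcoords_def pww_def)
  fix n a b assume n: "Suc 0 \<le> n" "n \<le> m" and ab: "a + b \<le> N"
  have "n \<in> {1..m}" using n by simp
  from dep_TDJ[OF assms(1)[OF this]]
  have "depends_only m (NQ + b + a) (TDJ m a b (Q n))" .
  then show "depends_only m (NQ + N) (TDJ m a b (Q n))" by (rule dep_mono) (use ab in simp)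
qed

lemma df_prw:
  assumes Q: "Qok m Q" and f: "diff_fun m f"
  shows "diff_fun m (prw m Q f)" "depends_only m N f \<Longrightarrow> (\<And>n. n \<in> {1..m} \<Longrightarrow> depends_only m NQ (Q n)) \<Longrightarrow> depends_only m (NQ + N) (prw m Q f)"
proof -
  show d: "depends_only m (NQ + N) (prw m Q f)" if N: "depends_only m N f"
      and NQ: "\<And>n. n \<in> {1..m} \<Longrightarrow> depends_only m NQ (Q n)" for N NQ
    unfolding prw_fun[OF N]
    by (rule dep_Lop[OF finite_CP dep_pww[OF NQ]]) (auto intro: dep_mono[OF N])
  obtain N where N: "depends_only m N f" and s: "smooth_jet f" using f by (auto simp: diff_fun_def)
  obtain NQ where NQ: "\<And>n. n \<in> {1..m} \<Longrightarrow> depends_only m NQ (Q n)" using Qok_bound[OF Q] by blast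
  have "smooth_jet (prw m Q f)" unfolding prw_fun[OF N] by (rule sm_Lop[OF finite_CP sm_pww[OF Q] s])
  then show "diff_fun m (prw m Q f)" using d[OF N NQ] by (auto simp: diff_fun_def)
qed

section \<open>Leibniz rules\<close>

lemma df_dl: "diff_fun m f \<Longrightarrow> dl f" by (auto simp: diff_fun_def intro: sm_dl)

lemma df_dep_common:
  assumes "diff_fun m f" "diff_fun m g"
  obtains N where "depends_only m N f" "depends_only m N g"
proof -
  obtain N1 N2 where "depends_only m N1 f" "depends_only m N2 g" using assms by (auto simp: diff_fun_def)
  then show ?thesis using that dep_mono by (metis max.cobounded1 max.cobounded2)
qed

lemma TD_bil:
  assumes P: "bounded_bilinear P" and f: "depends_only m N f" "dl f" and g: "depends_only m N g" "dl g"
  shows "TD m \<alpha> (\<lambda>q. P (f q) (g q)) p = P (f p) (TD m \<alpha> g p) + P (TD m \<alpha> f p) (g p)"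
proof -
  have d: "depends_only m N (\<lambda>q. P (f q) (g q))" by (rule dep_comb[OF f(1) g(1)])
  show ?thesis unfolding TD_Lop[OF d] TD_Lop[OF f(1)] TD_Lop[OF g(1)] by (rule Lop_bil[OF P f(2) g(2)])
qed

lemma prw_bil:
  assumes P: "bounded_bilinear P" and f: "depends_only m N f" "dl f" and g: "depends_only m N g" "dl g"
  shows "prw m Q (\<lambda>q. P (f q) (g q)) p = P (f p) (prw m Q g p) + P (prw m Q f p) (g p)"
proof -
  have d: "depends_only m N (\<lambda>q. P (f q) (g q))" by (rule dep_comb[OF f(1) g(1)])
  show ?thesis unfolding prw_Lop[OF d] prw_Lop[OF f(1)] prw_Lop[OF g(1)] by (rule Lop_bil[OF P f(2) g(2)])
qed

lemma TD_diff:
  assumes f: "depends_only m N f" "dl f" and g: "depends_only m N g" "dl g"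
  shows "TD m \<alpha> (\<lambda>q. f q - g q) p = TD m \<alpha> f p - TD m \<alpha> g p"
proof -
  have d: "depends_only m N (\<lambda>q. f q - g q)" by (rule dep_comb[OF f(1) g(1)])
  show ?thesis unfolding TD_Lop[OF d] TD_Lop[OF f(1)] TD_Lop[OF g(1)] by (rule Lop_diff[OF f(2) g(2)])
qed

lemma TD_add:
  assumes f: "depends_only m N f" "dl f" and g: "depends_only m N g" "dl g"
  shows "TD m \<alpha> (\<lambda>q. f q + g q) p = TD m \<alpha> f p + TD m \<alpha> g p"
proof -
  have d: "depends_only m N (\<lambda>q. f q + g q)" by (rule dep_comb[OF f(1) g(1)])
  show ?thesis unfolding TD_Lop[OF d] TD_Lop[OF f(1)] TD_Lop[OF g(1)] by (rule Lop_add[OF f(2) g(2)])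
qed

lemma prw_diff:
  assumes f: "depends_only m N f" "dl f" and g: "depends_only m N g" "dl g"
  shows "prw m Q (\<lambda>q. f q - g q) p = prw m Q f p - prw m Q g p"
proof -
  have d: "depends_only m N (\<lambda>q. f q - g q)" by (rule dep_comb[OF f(1) g(1)])
  show ?thesis unfolding prw_Lop[OF d] prw_Lop[OF f(1)] prw_Lop[OF g(1)] by (rule Lop_diff[OF f(2) g(2)])
qed

lemma prw_add:
  assumes f: "depends_only m N f" "dl f" and g: "depends_only m N g" "dl g"
  shows "prw m Q (\<lambda>q. f q + g q) p = prw m Q f p + prw m Q g p"
proof -
  have d: "depends_only m N (\<lambda>q. f q + g q)" by (rule dep_comb[OF f(1) g(1)])
  show ?thesis unfolding prw_Lop[OF d] prw_Lop[OF f(1)] prw_Lop[OF g(1)] by (rule Lop_add[OF f(2) g(2)])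
qed

lemma TD_lin:
  assumes L: "bounded_linear L" and f: "depends_only m N f" "dl f"
  shows "TD m \<alpha> (\<lambda>q. L (f q)) p = L (TD m \<alpha> f p)"
proof -
  have d: "depends_only m N (\<lambda>q. L (f q))" using f(1) unfolding depends_only_def by metis
  show ?thesis unfolding TD_Lop[OF d] TD_Lop[OF f(1)] by (rule Lop_lin[OF L f(2)])
qed


lemma xc_ne1: "\<alpha> \<noteq> Suc 0 \<Longrightarrow> xc \<alpha> = X2"
  by (cases \<alpha> rule: xc.cases) auto

lemma shift_ne1: "\<alpha> \<noteq> Suc 0 \<Longrightarrow> shift \<alpha> t = shift 2 t"
  by (cases t; cases \<alpha> rule: xc.cases) (auto simp: numeral_2_eq_2)

lemma TD_ne1: "\<alpha> \<noteq> Suc 0 \<Longrightarrow> TD m \<alpha> f = TD m 2 f"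
  by (intro ext) (simp add: TD_def xc_ne1 shift_ne1 numeral_2_eq_2)

lemma tdw_Th: "tdw \<alpha> (Th n a b) = (\<lambda>q. q (shift \<alpha> (n, a, b)))"
  by (simp add: tdw_def)

lemma shift1: "shift (Suc 0) (n, a, b) = Th n (Suc a) b" by simp
lemma shift2: "shift 2 (n, a, b) = Th n a (Suc b)" by (simp add: numeral_2_eq_2)

lemma CP_mono: "N \<le> N' \<Longrightarrow> CP m N \<subseteq> CP m N'"
  unfolding CP_def using thcoords_mono by blast

lemma pd_out: "depends_only m N f \<Longrightarrow> c \<in> CP m N' \<Longrightarrow> c \<notin> CP m N \<Longrightarrow> pd c f p = 0"
proof -
  assume d: "depends_only m N f" and c: "c \<in> CP m N'" "c \<notin> CP m N"
  show ?thesis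
  proof (rule CP_cases[OF c(1)])
    fix n a b assume e: "c = Th n a b"
    have "(n, a, b) \<notin> thcoords m N" using c(2) e Th_in_CP by auto
    then have "\<not> relevant m N c" using e relevant_Th by blast
    then show ?thesis by (rule pd_irrel[OF d])
  qed
qed

lemma sum_CT: "(\<Sum>c\<in>CT m \<alpha> N. F c) = F (xc \<alpha>) + (\<Sum>c\<in>CP m N. F c)"
  unfolding CT_def by (simp add: finite_CP xc_notin)

lemma TD12:
  fixes g :: "jet \<Rightarrow> 'v::euclidean_space"
  assumes g: "diff_fun m g"
  shows "TD m (Suc 0) (TD m 2 g) = TD m 2 (TD m (Suc 0) g)"
proof
  fix p
  obtain N where N: "depends_only m N g" and s: "smooth_jet g" using g by (auto simp: diff_fun_def)
  define N1 where "N1 = N + 2"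
  let ?X = "Lop (tdw 1) (CT m 1 N1)" and ?Y = "Lop (tdw 2) (CT m 2 N1)"
  have dN1: "depends_only m N1 g" using dep_mono[OF N] by (simp add: N1_def)
  have e2: "TD m 2 g = ?Y g" by (rule TD_fun[OF dN1])
  have e1: "TD m 1 g = ?X g" by (rule TD_fun[OF dN1])
  have "depends_only m N1 (TD m 2 g)" using dep_mono[OF dep_TD[OF N]] by (simp add: N1_def)
  then have e12: "TD m 1 (TD m 2 g) p = ?X (?Y g) p" using TD_Lop e2 by metis
  have "depends_only m N1 (TD m 1 g)" using dep_mono[OF dep_TD[OF N]] by (simp add: N1_def)
  then have e21: "TD m 2 (TD m 1 g) p = ?Y (?X g) p" using TD_Lop e1 by metis
  define h where "h c = (case c of Th n a b \<Rightarrow> p (Th n (Suc a) (Suc b)) *\<^sub>R pd c g p | _ \<Rightarrow> 0)" for c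
  have dlw: "dl (tdw \<alpha> c)" for \<alpha> c by (rule sm_dl[OF sm_tdw])
  have c1: "?X (tdw 2 d) p *\<^sub>R pd d g p = h d" if "d \<in> CP m N1" for d
  proof (rule CP_cases[OF that])
    fix n a b assume d: "d = Th n a b" and n: "n \<in> {1..m}" and ab: "a + b \<le> N1"
    show ?thesis
    proof (cases "a + b \<le> N")
      case True
      then have "Th n a (Suc b) \<in> CT m 1 N1" using n by (simp add: Th_in_CT thcoords_def N1_def)
      then show ?thesis
        by (simp add: d tdw_Th shift2 Lop_coord finite_CT shift1 h_def)
    next
      case False
      then have "pd d g p = 0" using n d by (intro pd_irrel[OF N]) (simp add: thcoords_def)
      then show ?thesis by (simp add: h_def d)
    qed
  qed
  have c2: "?Y (tdw 1 c) p *\<^sub>R pd c g p = h c" if "c \<in> CP m N1" for c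
  proof (rule CP_cases[OF that])
    fix n a b assume d: "c = Th n a b" and n: "n \<in> {1..m}" and ab: "a + b \<le> N1"
    show ?thesis
    proof (cases "a + b \<le> N")
      case True
      then have "Th n (Suc a) b \<in> CT m 2 N1" using n by (simp add: Th_in_CT thcoords_def N1_def)
      then show ?thesis
        by (simp add: d tdw_Th Lop_coord finite_CT h_def numeral_2_eq_2)
    next
      case False
      then have "pd c g p = 0" using n d by (intro pd_irrel[OF N]) (simp add: thcoords_def)
      then show ?thesis by (simp add: h_def d)
    qed
  qed
  have hx: "h (xc \<alpha>) = 0" for \<alpha> using xc_cases[of \<alpha>] by (auto simp: h_def)
  have "?X (?Y g) p - ?Y (?X g) p =
      (\<Sum>d\<in>CT m 2 N1. ?X (tdw 2 d) p *\<^sub>R pd d g p) - (\<Sum>c\<in>CT m 1 N1. ?Y (tdw 1 c) p *\<^sub>R pd c g p)"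
    by (rule Lop_comm[OF finite_CT finite_CT dlw dlw s])
  also have "\<dots> = 0"
    unfolding sum_CT tdw_xc Lop_const using c1 c2 by (simp add: hx)
  finally show "TD m (Suc 0) (TD m 2 g) p = TD m 2 (TD m (Suc 0) g) p" using e12 e21 by simp
qed

lemma TDJ_Suc1: "TD m (Suc 0) (TDJ m a b g) = TDJ m (Suc a) b g"
  by (simp add: TDJ_def)

lemma TD2_pow1:
  fixes h :: "jet \<Rightarrow> 'v::euclidean_space"
  assumes h: "diff_fun m h"
  shows "TD m 2 ((TD m (Suc 0) ^^ k) h) = (TD m (Suc 0) ^^ k) (TD m 2 h)"
proof (induction k)
  case 0 then show ?case by simp
next
  case (Suc k)
  have d: "diff_fun m ((TD m (Suc 0) ^^ k) h)" using h by (induction k) (simp_all add: df_TD)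
  have "TD m 2 ((TD m (Suc 0) ^^ Suc k) h) = TD m 2 (TD m (Suc 0) ((TD m (Suc 0) ^^ k) h))" by simp
  also have "\<dots> = TD m (Suc 0) (TD m 2 ((TD m (Suc 0) ^^ k) h))" using TD12[OF d] by simp
  also have "\<dots> = TD m (Suc 0) ((TD m (Suc 0) ^^ k) (TD m 2 h))" using Suc by simp
  finally show ?case by simp
qed

lemma TD_TDJ:
  fixes g :: "jet \<Rightarrow> 'v::euclidean_space"
  assumes g: "diff_fun m g"
  shows "TD m \<alpha> (TDJ m a b g) = (if \<alpha> = Suc 0 then TDJ m (Suc a) b g else TDJ m a (Suc b) g)"
proof (cases "\<alpha> = Suc 0")
  case True then show ?thesis using TDJ_Suc1 by simp
next
  case False
  have e: "TD m \<alpha> = TD m 2" by (rule ext) (rule TD_ne1[OF False])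
  have d: "diff_fun m ((TD m 2 ^^ b) g)" using g by (induction b) (simp_all add: df_TD)
  have "TD m 2 (TDJ m a b g) = TDJ m a (Suc b) g"
    unfolding TDJ_def using TD2_pow1[OF d, of a] by simp
  then show ?thesis using False by (subst e) simp
qed


lemma shift_ne1': "\<alpha> \<noteq> Suc 0 \<Longrightarrow> shift \<alpha> (n, a, b) = Th n a (Suc b)"
  using shift_ne1[of \<alpha> "(n, a, b)"] shift2 by simp

lemma TD_prw:
  fixes f :: "jet \<Rightarrow> 'v::euclidean_space"
  assumes Q: "Qok m Q" and f: "diff_fun m f"
  shows "TD m \<alpha> (prw m Q f) = prw m Q (TD m \<alpha> f)"
proof
  fix p
  obtain N where N: "depends_only m N f" and s: "smooth_jet f" using f by (auto simp: diff_fun_def)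
  obtain NQ where NQ: "\<And>n. n \<in> {1..m} \<Longrightarrow> depends_only m NQ (Q n)" using Qok_bound[OF Q] by blast
  define N2 where "N2 = Suc N"
  define N1 where "N1 = NQ + N + 2"
  let ?X = "Lop (tdw \<alpha>) (CT m \<alpha> N1)" and ?Y = "Lop (pww m Q) (CP m N2)"
  have eY: "prw m Q f = ?Y f" using prw_fun[OF dep_mono[OF N, of N2]] by (simp add: N2_def)
  have eX: "TD m \<alpha> f = ?X f" using TD_fun[OF dep_mono[OF N, of N1]] by (simp add: N1_def)
  have "depends_only m N1 (prw m Q f)" using dep_mono[OF df_prw(2)[OF Q f N NQ]] by (simp add: N1_def)
  then have e1: "TD m \<alpha> (prw m Q f) p = ?X (?Y f) p" using TD_Lop eY by metis
  have "depends_only m N2 (TD m \<alpha> f)" using dep_TD[OF N] by (simp add: N2_def)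
  then have e2: "prw m Q (TD m \<alpha> f) p = ?Y (?X f) p" using prw_Lop eX by metis
  define h where "h c = (case c of Th n a b \<Rightarrow>
      (if \<alpha> = Suc 0 then TDJ m (Suc a) b (Q n) p else TDJ m a (Suc b) (Q n) p) *\<^sub>R pd c f p | _ \<Rightarrow> 0)" for c
  have dlw: "dl (tdw \<alpha> c)" for c by (rule sm_dl[OF sm_tdw])
  have dlv: "dl (pww m Q d)" if "d \<in> CP m N2" for d by (rule sm_dl[OF sm_pww[OF Q that]])
  have c1: "?X (pww m Q d) p *\<^sub>R pd d f p = h d" if "d \<in> CP m N2" for d
  proof (rule CP_cases[OF that])
    fix n a b assume d: "d = Th n a b" and n: "n \<in> {1..m}" and ab: "a + b \<le> N2"
    have dq: "diff_fun m (Q n)" using Q n by (simp add: Qok_def)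
    have "depends_only m (NQ + b + a) (TDJ m a b (Q n))" by (rule dep_TDJ[OF NQ[OF n]])
    then have "depends_only m N1 (TDJ m a b (Q n))"
      by (rule dep_mono) (use ab in \<open>simp add: N1_def N2_def\<close>)
    then have "?X (TDJ m a b (Q n)) p = TD m \<alpha> (TDJ m a b (Q n)) p" using TD_Lop by metis
    then show ?thesis by (simp add: d pww_def h_def TD_TDJ[OF dq])
  qed
  have c2: "?Y (tdw \<alpha> c) p *\<^sub>R pd c f p = h c" if "c \<in> CP m N1" for c
  proof (rule CP_cases[OF that])
    fix n a b assume d: "c = Th n a b" and n: "n \<in> {1..m}" and ab: "a + b \<le> N1"
    show ?thesis
    proof (cases "a + b \<le> N")
      case True
      show ?thesis
      proof (cases "\<alpha> = Suc 0")
        case True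
        have "Th n (Suc a) b \<in> CP m N2" using n \<open>a + b \<le> N\<close> by (simp add: Th_in_CP thcoords_def N2_def)
        then show ?thesis using True by (simp add: d tdw_Th Lop_coord finite_CP h_def pww_def)
      next
        case False
        have "Th n a (Suc b) \<in> CP m N2" using n \<open>a + b \<le> N\<close> by (simp add: Th_in_CP thcoords_def N2_def)
        then show ?thesis using False
          by (simp add: d tdw_Th Lop_coord finite_CP h_def pww_def shift_ne1')
      qed
    next
      case False
      then have "pd c f p = 0" using n d by (intro pd_irrel[OF N]) (simp add: thcoords_def)
      then show ?thesis by (simp add: h_def d)
    qed
  qed
  have hx: "h (xc \<beta>) = 0" for \<beta> using xc_cases[of \<beta>] by (auto simp: h_def)
  have hout: "h c = 0" if "c \<in> CP m N'" "c \<notin> CP m N" for c N'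
    using pd_out[OF N that] that(1) by (auto simp: h_def CP_def)
  have s2: "(\<Sum>c\<in>CP m N2. h c) = (\<Sum>c\<in>CP m N. h c)"
    by (rule sum.mono_neutral_right[OF finite_CP CP_mono]) (auto simp: N2_def intro: hout)
  have s1: "(\<Sum>c\<in>CP m N1. h c) = (\<Sum>c\<in>CP m N. h c)"
    by (rule sum.mono_neutral_right[OF finite_CP CP_mono]) (auto simp: N1_def intro: hout)
  have "?X (?Y f) p - ?Y (?X f) p =
      (\<Sum>d\<in>CP m N2. ?X (pww m Q d) p *\<^sub>R pd d f p) - (\<Sum>c\<in>CT m \<alpha> N1. ?Y (tdw \<alpha> c) p *\<^sub>R pd c f p)"
    by (rule Lop_comm[OF finite_CT finite_CP dlw dlv s])
  also have "\<dots> = (\<Sum>c\<in>CP m N2. h c) - (\<Sum>c\<in>CP m N1. h c)"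
    unfolding sum_CT tdw_xc Lop_const using c1 c2 by simp
  also have "\<dots> = 0" using s1 s2 by simp
  finally show "TD m \<alpha> (prw m Q f) p = prw m Q (TD m \<alpha> f) p" using e1 e2 by simp
qed


lemma df_mm:
  fixes f g :: "jet \<Rightarrow> 'k::finite cmat"
  assumes "diff_fun m f" "diff_fun m g"
  shows "diff_fun m (\<lambda>q. f q ** g q)"
proof -
  obtain N where "depends_only m N f" "depends_only m N g" using df_dep_common[OF assms] by blast
  then have "depends_only m N (\<lambda>q. f q ** g q)" by (rule dep_comb)
  moreover have "smooth_jet (\<lambda>q. f q ** g q)"
    using assms sm_bil[OF bb_mm] by (auto simp: diff_fun_def)
  ultimately show ?thesis by (auto simp: diff_fun_def)
qed

lemma prw_mm:
  fixes f g :: "jet \<Rightarrow> 'k::finite cmat"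
  assumes "diff_fun m f" "diff_fun m g"
  shows "prw m Q (\<lambda>q. f q ** g q) p = f p ** prw m Q g p + prw m Q f p ** g p"
proof -
  obtain N where "depends_only m N f" "depends_only m N g" using df_dep_common[OF assms] by blast
  then show ?thesis using prw_bil[OF bb_mm, of m N f g Q p] df_dl[OF assms(1)] df_dl[OF assms(2)] by simp
qed

lemma prw_diff_df:
  fixes f g :: "jet \<Rightarrow> 'v::real_normed_vector"
  assumes "diff_fun m f" "diff_fun m g"
  shows "prw m Q (\<lambda>q. f q - g q) p = prw m Q f p - prw m Q g p"
proof -
  obtain N where "depends_only m N f" "depends_only m N g" using df_dep_common[OF assms] by blast
  then show ?thesis using prw_diff[of m N f g Q p] df_dl[OF assms(1)] df_dl[OF assms(2)] by simp
qed

lemma prw_add_df: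
  fixes f g :: "jet \<Rightarrow> 'v::real_normed_vector"
  assumes "diff_fun m f" "diff_fun m g"
  shows "prw m Q (\<lambda>q. f q + g q) p = prw m Q f p + prw m Q g p"
proof -
  obtain N where "depends_only m N f" "depends_only m N g" using df_dep_common[OF assms] by blast
  then show ?thesis using prw_add[of m N f g Q p] df_dl[OF assms(1)] df_dl[OF assms(2)] by simp
qed

lemma df_diff:
  fixes f g :: "jet \<Rightarrow> 'v::real_normed_vector"
  assumes "diff_fun m f" "diff_fun m g"
  shows "diff_fun m (\<lambda>q. f q - g q)"
proof -
  obtain N where "depends_only m N f" "depends_only m N g" using df_dep_common[OF assms] by blast
  then have "depends_only m N (\<lambda>q. f q - g q)" by (rule dep_comb)
  then show ?thesis using assms sm_diff by (auto simp: diff_fun_def)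
qed

lemma df_brk:
  fixes f g :: "jet \<Rightarrow> 'k::finite cmat"
  assumes "diff_fun m f" "diff_fun m g"
  shows "diff_fun m (\<lambda>q. brk (f q) (g q))"
proof -
  obtain N where "depends_only m N f" "depends_only m N g" using df_dep_common[OF assms] by blast
  then have "depends_only m N (\<lambda>q. brk (f q) (g q))" by (rule dep_comb)
  moreover have "smooth_jet (\<lambda>q. brk (f q) (g q))"
    using assms sm_bil[OF bb_brk] by (auto simp: diff_fun_def)
  ultimately show ?thesis by (auto simp: diff_fun_def)
qed

lemma prw_brk:
  fixes f g :: "jet \<Rightarrow> 'k::finite cmat"
  assumes "diff_fun m f" "diff_fun m g"
  shows "prw m Q (\<lambda>q. brk (f q) (g q)) p = brk (f p) (prw m Q g p) + brk (prw m Q f p) (g p)"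
proof -
  obtain N where "depends_only m N f" "depends_only m N g" using df_dep_common[OF assms] by blast
  then show ?thesis using prw_bil[OF bb_brk, of m N f g Q p] df_dl[OF assms(1)] df_dl[OF assms(2)] by simp
qed

lemma TD_inv:
  fixes \<Phi> :: "jet \<Rightarrow> 'k::finite cmat"
  assumes d: "diff_fun m \<Phi>" and inv: "\<And>p. invertible (\<Phi> p)"
  shows "TD m \<alpha> (\<lambda>q. matrix_inv (\<Phi> q)) p = - (matrix_inv (\<Phi> p) ** TD m \<alpha> \<Phi> p ** matrix_inv (\<Phi> p))"
proof -
  obtain N where N: "depends_only m N \<Phi>" using d by (auto simp: diff_fun_def)
  have Ni: "depends_only m N (\<lambda>q. matrix_inv (\<Phi> q))" using N unfolding depends_only_def by metis
  let ?L = "\<lambda>X. - (matrix_inv (\<Phi> p) ** X ** matrix_inv (\<Phi> p))"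
  interpret mm: bounded_bilinear "\<lambda>(A::'k cmat) (B::'k cmat). A ** B" by (rule bb_mm)
  have L: "bounded_linear ?L"
    by (intro bounded_linear_minus mm.bounded_linear_left[THEN bounded_linear_compose] mm.bounded_linear_right)
  interpret L: bounded_linear ?L by (rule L)
  have "TD m \<alpha> (\<lambda>q. matrix_inv (\<Phi> q)) p = (\<Sum>c\<in>CT m \<alpha> N. tdw \<alpha> c p *\<^sub>R ?L (pd c \<Phi> p))"
    unfolding TD_Lop[OF Ni] Lop_def pd_inv[OF df_dl[OF d] inv] by simp
  also have "\<dots> = ?L (TD m \<alpha> \<Phi> p)"
    unfolding TD_Lop[OF N] Lop_def by (simp only: L.sum L.scaleR)
  finally show ?thesis .
qed

lemma TD_mm:
  fixes f g :: "jet \<Rightarrow> 'k::finite cmat"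
  assumes f: "depends_only m N f" "dl f" and g: "depends_only m N g" "dl g"
  shows "TD m \<alpha> (\<lambda>q. f q ** g q) p = f p ** TD m \<alpha> g p + TD m \<alpha> f p ** g p"
  using TD_bil[OF bb_mm f g] by simp

lemma lie_pd:
  fixes \<Phi> :: "jet \<Rightarrow> 'k::finite cmat"
  assumes G: "matrix_lie_group G" and PG: "\<And>p. \<Phi> p \<in> G" and d: "dl \<Phi>"
  shows "matrix_inv (\<Phi> p) ** pd c \<Phi> p \<in> lie_alg G"
proof -
  interpret mm: bounded_bilinear "\<lambda>(A::'k cmat) (B::'k cmat). A ** B" by (rule bb_mm)
  define \<gamma> where "\<gamma> s = matrix_inv (\<Phi> p) ** \<Phi> (p(c := p c + s))" for s
  have inv: "invertible (\<Phi> p)" using G PG unfolding matrix_lie_group_def by blast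
  have "\<gamma> s \<in> G" for s using G PG unfolding \<gamma>_def matrix_lie_group_def by blast
  moreover have "\<gamma> 0 = mat 1" by (simp add: \<gamma>_def mi_lr[OF inv])
  moreover have "(\<gamma> has_vector_derivative matrix_inv (\<Phi> p) ** pd c \<Phi> p) (at 0)"
  proof -
    have f: "((\<lambda>s. p c + s) has_vector_derivative 1) (at 0)"
      by (auto intro!: derivative_eq_intros)
    have g: "((\<lambda>t. \<Phi> (p(c := t))) has_vector_derivative pd c \<Phi> p) (at (p c + 0))"
      using hvd[OF d] by simp
    from vector_diff_chain_at[OF f g]
    have "((\<lambda>s. \<Phi> (p(c := p c + s))) has_vector_derivative pd c \<Phi> p) (at 0)" by (simp add: o_def)
    from bounded_linear.has_vector_derivative[OF mm.bounded_linear_right this]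
    show ?thesis unfolding \<gamma>_def .
  qed
  ultimately show ?thesis by (rule curve_lie[OF G])
qed

lemma cancel_inv:
  fixes P i U T Aa \<Psi> :: "'k::finite cmat"
  assumes inv: "invertible P" and i: "i = matrix_inv P"
  shows "(- (i ** U) ** \<Psi> + i ** T = i ** Aa ** P) \<longleftrightarrow> (T = U ** \<Psi> + Aa ** P)"
proof -
  interpret mm: bounded_bilinear "\<lambda>(A::'k cmat) (B::'k cmat). A ** B" by (rule bb_mm)
  have l: "i ** P = mat 1" "P ** i = mat 1" using mi_lr[OF inv] i by simp_all
  have "- (i ** U) ** \<Psi> + i ** T = i ** (T - U ** \<Psi>)"
    by (simp add: mm.diff_right mm.minus_left matrix_mul_assoc)
  moreover have "i ** Aa ** P = i ** (Aa ** P)" by (simp add: matrix_mul_assoc)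
  moreover have "(i ** X = i ** Y) \<longleftrightarrow> X = Y" for X Y :: "'k cmat"
  proof
    assume "i ** X = i ** Y"
    then have "P ** (i ** X) = P ** (i ** Y)" by simp
    then show "X = Y" by (simp add: matrix_mul_assoc l)
  qed simp
  ultimately show ?thesis by (auto simp: algebra_simps)
qed

theorem proposition3:
  fixes m :: nat
    and G :: "'k::finite cmat set"
    and u :: "nat \<Rightarrow> jet \<Rightarrow> 'k cmat"
    and \<Phi> :: "jet \<Rightarrow> 'k cmat"
    and Q :: "nat \<Rightarrow> jet \<Rightarrow> real"
  defines "\<Delta> \<equiv> (\<lambda>p. TD m 2 (u 1) p - TD m 1 (u 2) p + brk (u 1 p) (u 2 p))"
  defines "S \<equiv> zero_set m {\<Delta>}"
  defines "L \<equiv> zero_set m {(\<lambda>p. TD m \<alpha> \<Phi> p - u \<alpha> p ** \<Phi> p) | \<alpha>. \<alpha> \<in> {1::nat, 2}}"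
  defines "F \<equiv> (\<lambda>p. matrix_inv (\<Phi> p) ** prw m Q \<Phi> p)"
  assumes m: "1 \<le> m"
    and G: "matrix_lie_group G"
    and u_df: "\<forall>\<alpha>\<in>{1,2}. diff_fun m (u \<alpha>)"
    and u_g: "\<forall>\<alpha>\<in>{1,2}. \<forall>p. u \<alpha> p \<in> lie_alg G"
    and indep: "\<exists>E :: (jet \<Rightarrow> real) set. finite E \<and> (\<forall>e\<in>E. diff_fun m e \<and> indep_x3 e)
                  \<and> S = zero_set m E"
    and Phi_df: "diff_fun m \<Phi>"
    and Phi_G: "\<forall>p. \<Phi> p \<in> G"
    and compat: "L \<subseteq> S"
    and Phi_solves: "S \<subseteq> L"
    and Q_df: "\<forall>n\<in>{1..m}. diff_fun m (Q n) \<and> indep_x3 (Q n)"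
    and sym: "\<forall>p\<in>S. prw m Q \<Delta> p = 0"
  shows "((\<forall>\<alpha>\<in>{1,2}. \<forall>p\<in>L. prw m Q (\<lambda>q. TD m \<alpha> \<Phi> q - u \<alpha> q ** \<Phi> q) p = 0)
            \<longleftrightarrow> (\<forall>\<alpha>\<in>{1,2}. \<forall>p\<in>S. TD m \<alpha> F p = matrix_inv (\<Phi> p) ** prw m Q (u \<alpha>) p ** \<Phi> p))
       \<and> ((\<forall>\<alpha>\<in>{1,2}. \<forall>p\<in>S. TD m \<alpha> F p = matrix_inv (\<Phi> p) ** prw m Q (u \<alpha>) p ** \<Phi> p)
            \<longleftrightarrow> gen_inf_sym m G S u \<Phi> (\<lambda>\<alpha>. prw m Q (u \<alpha>)) (prw m Q \<Phi>))"
proof -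
  interpret mm: bounded_bilinear "\<lambda>(A::'k cmat) (B::'k cmat). A ** B" by (rule bb_mm)
  have Ginv: "\<And>A. A \<in> G \<Longrightarrow> invertible A" using G unfolding matrix_lie_group_def by blast
  have inv: "\<And>p. invertible (\<Phi> p)" using Phi_G Ginv by blast
  have Q: "Qok m Q" using Q_df by (simp add: Qok_def)
  have u1: "diff_fun m (u 1)" and u2: "diff_fun m (u 2)" using u_df by auto
  have uu: "\<And>\<alpha>. \<alpha> \<in> {1,2} \<Longrightarrow> diff_fun m (u \<alpha>)" using u_df by auto
  have SL: "S = L" using compat Phi_solves by blast
  have dPsi: "diff_fun m (prw m Q \<Phi>)" by (rule df_prw(1)[OF Q Phi_df])
  have onS: "TD m \<alpha> \<Phi> p = u \<alpha> p ** \<Phi> p" if "\<alpha> \<in> {1,2}" "p \<in> S" for \<alpha> p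
  proof -
    have "p \<in> L" using that SL by simp
    moreover have "(\<lambda>p. TD m \<alpha> \<Phi> p - u \<alpha> p ** \<Phi> p) \<in> {(\<lambda>p. TD m \<alpha> \<Phi> p - u \<alpha> p ** \<Phi> p) | \<alpha>. \<alpha> \<in> {1::nat, 2}}"
      using that(1) by blast
    ultimately have "TDJ m 0 0 (\<lambda>p. TD m \<alpha> \<Phi> p - u \<alpha> p ** \<Phi> p) p = 0"
      unfolding L_def zero_set_def by blast
    then show ?thesis by (simp add: TDJ_def)
  qed
  have K1: "prw m Q (\<lambda>q. TD m \<alpha> \<Phi> q - u \<alpha> q ** \<Phi> q) p =
      TD m \<alpha> (prw m Q \<Phi>) p - (u \<alpha> p ** prw m Q \<Phi> p + prw m Q (u \<alpha>) p ** \<Phi> p)"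
    if "\<alpha> \<in> {1,2}" for \<alpha> p
  proof -
    have du: "diff_fun m (u \<alpha>)" using uu that by blast
    have "prw m Q (\<lambda>q. TD m \<alpha> \<Phi> q - u \<alpha> q ** \<Phi> q) p = prw m Q (TD m \<alpha> \<Phi>) p - prw m Q (\<lambda>q. u \<alpha> q ** \<Phi> q) p"
      by (rule prw_diff_df[OF df_TD[OF Phi_df] df_mm[OF du Phi_df]])
    also have "prw m Q (TD m \<alpha> \<Phi>) p = TD m \<alpha> (prw m Q \<Phi>) p" using TD_prw[OF Q Phi_df] by simp
    also have "prw m Q (\<lambda>q. u \<alpha> q ** \<Phi> q) p = u \<alpha> p ** prw m Q \<Phi> p + prw m Q (u \<alpha>) p ** \<Phi> p"
      by (rule prw_mm[OF du Phi_df])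
    finally show ?thesis .
  qed
  have K2: "TD m \<alpha> F p = - (matrix_inv (\<Phi> p) ** u \<alpha> p) ** prw m Q \<Phi> p + matrix_inv (\<Phi> p) ** TD m \<alpha> (prw m Q \<Phi>) p"
    if "\<alpha> \<in> {1,2}" "p \<in> S" for \<alpha> p
  proof -
    obtain N where N1: "depends_only m N \<Phi>" "depends_only m N (prw m Q \<Phi>)"
      using df_dep_common[OF Phi_df dPsi] by blast
    have Ni: "depends_only m N (\<lambda>q. matrix_inv (\<Phi> q))" using N1(1) unfolding depends_only_def by metis
    have "TD m \<alpha> F p = matrix_inv (\<Phi> p) ** TD m \<alpha> (prw m Q \<Phi>) p + TD m \<alpha> (\<lambda>q. matrix_inv (\<Phi> q)) p ** prw m Q \<Phi> p"
      unfolding F_def by (rule TD_mm[OF Ni dl_inv[OF df_dl[OF Phi_df] inv] N1(2) df_dl[OF dPsi]])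
    also have "TD m \<alpha> (\<lambda>q. matrix_inv (\<Phi> q)) p = - (matrix_inv (\<Phi> p) ** u \<alpha> p)"
    proof -
      have "TD m \<alpha> (\<lambda>q. matrix_inv (\<Phi> q)) p = - (matrix_inv (\<Phi> p) ** (u \<alpha> p ** \<Phi> p) ** matrix_inv (\<Phi> p))"
        using TD_inv[OF Phi_df inv] onS[OF that] by simp
      also have "\<dots> = - (matrix_inv (\<Phi> p) ** u \<alpha> p)"
        by (simp add: matrix_mul_assoc[symmetric] mi_lr[OF inv])
      finally show ?thesis .
    qed
    finally show ?thesis by (simp add: algebra_simps)
  qed
  have K3: "prw m Q \<Delta> p = TD m 2 (prw m Q (u 1)) p - TD m 1 (prw m Q (u 2)) p
      + (brk (u 1 p) (prw m Q (u 2) p) + brk (prw m Q (u 1) p) (u 2 p))" for p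
  proof -
    have "prw m Q \<Delta> p = prw m Q (\<lambda>q. TD m 2 (u 1) q - TD m 1 (u 2) q) p + prw m Q (\<lambda>q. brk (u 1 q) (u 2 q)) p"
      unfolding \<Delta>_def by (rule prw_add_df[OF df_diff[OF df_TD[OF u1] df_TD[OF u2]] df_brk[OF u1 u2]])
    also have "prw m Q (\<lambda>q. TD m 2 (u 1) q - TD m 1 (u 2) q) p = prw m Q (TD m 2 (u 1)) p - prw m Q (TD m 1 (u 2)) p"
      by (rule prw_diff_df[OF df_TD[OF u1] df_TD[OF u2]])
    also have "prw m Q (\<lambda>q. brk (u 1 q) (u 2 q)) p = brk (u 1 p) (prw m Q (u 2) p) + brk (prw m Q (u 1) p) (u 2 p)"
      by (rule prw_brk[OF u1 u2])
    finally show ?thesis using TD_prw[OF Q u1] TD_prw[OF Q u2] by simp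
  qed
  have cond1: "\<forall>p\<in>S. TD m 2 (prw m Q (u 1)) p - TD m 1 (prw m Q (u 2)) p + brk (prw m Q (u 1) p) (u 2 p) + brk (u 1 p) (prw m Q (u 2) p) = 0"
  proof
    fix p assume "p \<in> S"
    then have "prw m Q \<Delta> p = 0" using sym by blast
    then show "TD m 2 (prw m Q (u 1)) p - TD m 1 (prw m Q (u 2)) p + brk (prw m Q (u 1) p) (u 2 p) + brk (u 1 p) (prw m Q (u 2) p) = 0"
      unfolding K3 by (simp add: algebra_simps)
  qed
  have cond2: "\<forall>p. matrix_inv (\<Phi> p) ** prw m Q \<Phi> p \<in> lie_alg G"
  proof
    fix p
    obtain N where N: "depends_only m N \<Phi>" using Phi_df by (auto simp: diff_fun_def)
    have "matrix_inv (\<Phi> p) ** prw m Q \<Phi> p = (\<Sum>c\<in>CP m N. pww m Q c p *\<^sub>R (matrix_inv (\<Phi> p) ** pd c \<Phi> p))"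
      unfolding prw_Lop[OF N] Lop_def by (simp add: mm.sum_right mm.scaleR_right)
    also have "\<dots> \<in> lie_alg G"
      by (intro lie_sum[OF G finite_CP] lie_scale lie_pd[OF G Phi_G[rule_format] df_dl[OF Phi_df]])
    finally show "matrix_inv (\<Phi> p) ** prw m Q \<Phi> p \<in> lie_alg G" .
  qed
  let ?E = "\<forall>\<alpha>\<in>{1,2}. \<forall>p\<in>S. TD m \<alpha> (prw m Q \<Phi>) p = u \<alpha> p ** prw m Q \<Phi> p + prw m Q (u \<alpha>) p ** \<Phi> p"
  have P1: "(\<forall>\<alpha>\<in>{1,2}. \<forall>p\<in>L. prw m Q (\<lambda>q. TD m \<alpha> \<Phi> q - u \<alpha> q ** \<Phi> q) p = 0) \<longleftrightarrow> ?E"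
    using K1 SL by auto
  have P2: "(\<forall>\<alpha>\<in>{1,2}. \<forall>p\<in>S. TD m \<alpha> F p = matrix_inv (\<Phi> p) ** prw m Q (u \<alpha>) p ** \<Phi> p) \<longleftrightarrow> ?E"
  proof -
    have "(TD m \<alpha> F p = matrix_inv (\<Phi> p) ** prw m Q (u \<alpha>) p ** \<Phi> p) \<longleftrightarrow>
        (TD m \<alpha> (prw m Q \<Phi>) p = u \<alpha> p ** prw m Q \<Phi> p + prw m Q (u \<alpha>) p ** \<Phi> p)"
      if "\<alpha> \<in> {1,2}" "p \<in> S" for \<alpha> p
      unfolding K2[OF that] by (rule cancel_inv[OF inv refl])
    then show ?thesis by blast
  qed
  have P3: "gen_inf_sym m G S u \<Phi> (\<lambda>\<alpha>. prw m Q (u \<alpha>)) (prw m Q \<Phi>) \<longleftrightarrow> ?E"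
    unfolding gen_inf_sym_def using cond1 cond2 by simp
  show ?thesis using P1 P2 P3 by simp
qed


end
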